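(* Suppose (A1) each $f_t(\cdot)=f(\cdot;\boldsymbol\xi_t)$ has $L_g$-Lipschitz continuous gradient and (A2) $\|\nabla f_t(\mathbf x)\|_\infty\le\eta$ for all $\mathbf x$. Run ZO-AdaMM on a closed convex set $\mathcal X$ with $\hat{\mathbf v}_0^{1/2}\ge c\mathbf 1$ ($c>0$), $\alpha_t=\alpha\le c/L_g$, $\mu=1/\sqrt{Td}$ and $\beta_{1,t}=0$, and assume $f_\mu(\mathbf x_1)-\min_{\mathbf x}f_\mu(\mathbf x)\le D_f$. Let $\mathbf x_R$ be picked uniformly at random from $\{\mathbf x_t\}_{t=1}^T$. Then \[ \mathbb E[\|\mathcal G(\mathbf x_R)\|^2]\le\frac{6D_f}{\alpha T}+\frac{3L_g^2d}{4cT}+\frac{6\eta^2}{c^4T}\Big(\max_{t\in[T]}\mathbb E[\|\hat{\mathbf g}_t-\nabla f_\mu(\mathbf x_t)\|^2]+d\eta^2\Big)+\frac{3c+9}{c}\max_{t\in[T]}\mathbb E[\|\hat{\mathbf g}_t-\nabla f_\mu(\mathbf x_t)\|^2]. \]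
   Context: Problem: $\min_{\mathbf x\in\mathcal X}f(\mathbf x)=\mathbb E_{\boldsymbol\xi}[f(\mathbf x;\boldsymbol\xi)]$, $\mathcal X\subseteq\mathbb R^d$ closed convex, $f(\cdot;\boldsymbol\xi)$ differentiable, $\boldsymbol\xi_t$ independent samples. ZO gradient estimate: $\hat\nabla h(\mathbf x)=(d/\mu)[h(\mathbf x+\mu\mathbf u)-h(\mathbf x)]\mathbf u$, $\mathbf u$ uniform on the unit sphere of $\mathbb R^d$, independent across iterations. Smoothed function: $f_\mu(\mathbf x)=\mathbb E_{\mathbf u\sim U_B}[f(\mathbf x+\mu\mathbf u)]$, $U_B$ uniform on the unit Euclidean ball. ZO-AdaMM: given $\mathbf x_1\in\mathcal X$, $\alpha_t$, $\beta_{1,t},\beta_2\in(0,1]$, $\mathbf m_0=\mathbf 0$, $\mathbf v_0=\mathbf 0$, $\hat{\mathbf v}_0$, for $t=1,\dots,T$: $\hat{\mathbf g}_t=\hat\nabla f_t(\mathbf x_t)$; $\mathbf m_t=\beta_{1,t}\mathbf m_{t-1}+(1-\beta_{1,t})\hat{\mathbf g}_t$; $\mathbf v_t=\beta_2\mathbf v_{t-1}+(1-\beta_2)\hat{\mathbf g}_t^2$; $\hat{\mathbf v}_t=\max(\hat{\mathbf v}_{t-1},\mathbf v_t)$, $\hat{\mathbf V}_t=\mathrm{diag}(\hat{\mathbf v}_t)$; $\mathbf x_{t+1}=\Pi_{\mathcal X,\sqrt{\hat{\mathbf V}_t}}(\mathbf x_t-\alpha_t\hat{\mathbf V}_t^{-1/2}\mathbf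 m_t)$, elementwise operations, $\Pi_{\mathcal X,\mathbf H}(\mathbf a)=\arg\min_{\mathbf x\in\mathcal X}\|\sqrt{\mathbf H}(\mathbf x-\mathbf a)\|_2^2$. Gradient mapping: for a positive definite diagonal $\mathbf H$, $\mathbf g\in\mathbb R^d$, $\omega>0$, $\mathbf x^-\in\mathbb R^d$, let $\mathbf x^+=\arg\min_{\mathbf x\in\mathcal X}\{\langle\mathbf g,\mathbf x\rangle+\frac1{2\omega}\|\mathbf H^{1/2}(\mathbf x-\mathbf x^-)\|^2\}$ and $P_{\mathcal X,\mathbf H}(\mathbf x^-,\mathbf g,\omega)=(\mathbf x^--\mathbf x^+)/\omega$. Convergence measure: $\|\mathcal G(\mathbf x_t)\|^2:=\|\hat{\mathbf V}_t^{1/4}P_{\mathcal X,\hat{\mathbf V}_t^{1/2}}(\mathbf x_t,\nabla f(\mathbf x_t),\alpha_t)\|^2$. $\|\cdot\|$ is the Euclidean norm; expectations are over all randomness. *)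

theory Defs
  imports "HOL-Probability.Probability"
begin

text \<open>Vectors of R^d are represented as real^'n with d = CARD('n).
  Positive definite diagonal matrices diag(h) are represented by their diagonal vector h.\<close>

definition grad :: "(real^'n \<Rightarrow> real) \<Rightarrow> real^'n \<Rightarrow> real^'n" where
  "grad f x = (SOME D. GDERIV f x :> D)"

text \<open>Uniform distribution on the unit Euclidean ball, and on the unit sphere
  (the latter as the radial projection of the former, which is the normalized surface measure).\<close>
definition unif_ball :: "(real^'n) measure" where
  "unif_ball = uniform_measure lborel (ball 0 1)"

definition unif_sphere :: "(real^'n) measure" where
  "unif_sphere = distr unif_ball borel (\<lambda>v. (1 / norm v) *\<^sub>R v)"

definition smooth :: "(real^'n \<Rightarrow> real) \<Rightarrow> real \<Rightarrow> real^'n \<Rightarrow> real" where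
  "smooth f \<mu> x = (\<integral>v. f (x + \<mu> *\<^sub>R v) \<partial>unif_ball)"

definition zo_grad :: "(real^'n \<Rightarrow> real) \<Rightarrow> real \<Rightarrow> real^'n \<Rightarrow> real^'n \<Rightarrow> real^'n" where
  "zo_grad h \<mu> x u = (real CARD('n) / \<mu> * (h (x + \<mu> *\<^sub>R u) - h x)) *\<^sub>R u"

definition hnorm :: "real^'n \<Rightarrow> real^'n \<Rightarrow> real" where
  "hnorm h v = norm (\<chi> i. sqrt (h $ i) * v $ i)"

definition wproj :: "(real^'n) set \<Rightarrow> real^'n \<Rightarrow> real^'n \<Rightarrow> real^'n" where
  "wproj X h a = arg_min_on (\<lambda>x. (hnorm h (x - a))\<^sup>2) X"

definition gmap_plus :: "(real^'n) set \<Rightarrow> real^'n \<Rightarrow> real^'n \<Rightarrow> real^'n \<Rightarrow> real \<Rightarrow> real^'n" where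
  "gmap_plus X h xm g \<omega> = arg_min_on (\<lambda>x. inner g x + 1 / (2 * \<omega>) * (hnorm h (x - xm))\<^sup>2) X"

definition gmap :: "(real^'n) set \<Rightarrow> real^'n \<Rightarrow> real^'n \<Rightarrow> real^'n \<Rightarrow> real \<Rightarrow> real^'n" where
  "gmap X h xm g \<omega> = (1 / \<omega>) *\<^sub>R (xm - gmap_plus X h xm g \<omega>)"

text \<open>State of ZO-AdaMM after iteration t: (x_{t+1}, m_t, v_t, vhat_t); state 0 = (x_1, 0, 0, vhat_0).
  F x s = f(x; s); xs t = xi_t and us t = u_t are the realized samples / directions.\<close>
primrec zo_adamm ::
  "(real^'n \<Rightarrow> 's \<Rightarrow> real) \<Rightarrow> (real^'n) set \<Rightarrow> real^'n \<Rightarrow> real^'n \<Rightarrow>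
   (nat \<Rightarrow> real) \<Rightarrow> (nat \<Rightarrow> real) \<Rightarrow> real \<Rightarrow> real \<Rightarrow> (nat \<Rightarrow> 's) \<Rightarrow> (nat \<Rightarrow> real^'n) \<Rightarrow> nat \<Rightarrow>
   (real^'n) \<times> (real^'n) \<times> (real^'n) \<times> (real^'n)" where
  "zo_adamm F X x1 vh0 \<alpha> \<beta>1 \<beta>2 \<mu> xs us 0 = (x1, 0, 0, vh0)"
| "zo_adamm F X x1 vh0 \<alpha> \<beta>1 \<beta>2 \<mu> xs us (Suc t) =
     (case zo_adamm F X x1 vh0 \<alpha> \<beta>1 \<beta>2 \<mu> xs us t of (x, m, v, vh) \<Rightarrow>
       let g = zo_grad (\<lambda>z. F z (xs (Suc t))) \<mu> x (us (Suc t));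
           m' = \<beta>1 (Suc t) *\<^sub>R m + (1 - \<beta>1 (Suc t)) *\<^sub>R g;
           v' = \<beta>2 *\<^sub>R v + (1 - \<beta>2) *\<^sub>R (\<chi> i. (g $ i)\<^sup>2);
           vh' = (\<chi> i. max (vh $ i) (v' $ i));
           x' = wproj X (\<chi> i. sqrt (vh' $ i))
                  (x - \<alpha> (Suc t) *\<^sub>R (\<chi> i. m' $ i / sqrt (vh' $ i)))
       in (x', m', v', vh'))"

definition zo_x where
  "zo_x F X x1 vh0 \<alpha> \<beta>1 \<beta>2 \<mu> xs us t = fst (zo_adamm F X x1 vh0 \<alpha> \<beta>1 \<beta>2 \<mu> xs us (t - 1))"

definition zo_vhat where
  "zo_vhat F X x1 vh0 \<alpha> \<beta>1 \<beta>2 \<mu> xs us t = snd (snd (snd (zo_adamm F X x1 vh0 \<alpha> \<beta>1 \<beta>2 \<mu> xs us t)))"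

definition zo_ghat where
  "zo_ghat F X x1 vh0 \<alpha> \<beta>1 \<beta>2 \<mu> xs us t =
     zo_grad (\<lambda>z. F z (xs t)) \<mu> (zo_x F X x1 vh0 \<alpha> \<beta>1 \<beta>2 \<mu> xs us t) (us t)"

text \<open>Probability space of all randomness: samples xi_1..xi_T (i.i.d. P), directions
  u_1..u_T (i.i.d. uniform on sphere), and R uniform on {1..T}, all independent.\<close>
definition omega ::
  "'s measure \<Rightarrow> nat \<Rightarrow> ((nat \<Rightarrow> 's) \<times> (nat \<Rightarrow> real^'n) \<times> nat) measure" where
  "omega P T = (PiM {1..T} (\<lambda>_. P)) \<Otimes>\<^sub>M ((PiM {1..T} (\<lambda>_. unif_sphere)) \<Otimes>\<^sub>M uniform_count_measure {1..T})"

end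

theory Submission
  imports Defs
begin

lemma sq_norm_vec: "(norm (v::real^'n))^2 = (\<Sum>i\<in>UNIV. (v$i)^2)"
  by (simp add: power2_norm_eq_inner inner_vec_def power2_eq_square[symmetric])

lemma small_t_lemma:
  fixes A B :: real
  assumes "\<And>t. 0 < t \<Longrightarrow> t \<le> 1 \<Longrightarrow> 0 \<le> t * A + t^2 * B"
  shows "0 \<le> A"
proof (rule ccontr)
  assume "\<not> 0 \<le> A"
  hence A: "A < 0" by simp
  define t where "t = min 1 (-A / (2 * (\<bar>B\<bar> + 1)))"
  have q: "0 < -A / (2 * (\<bar>B\<bar> + 1))" using A by (intro divide_pos_pos) auto
  have t0: "0 < t" using q by (auto simp: t_def)
  have t1: "t \<le> 1" by (simp add: t_def)
  have tle: "t \<le> -A / (2 * (\<bar>B\<bar> + 1))" by (simp add: t_def)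
  hence "t * (\<bar>B\<bar> + 1) \<le> -A/2"
  proof -
    have "t * (\<bar>B\<bar> + 1) \<le> -A / (2 * (\<bar>B\<bar> + 1)) * (\<bar>B\<bar> + 1)"
      by (rule mult_right_mono[OF tle]) simp
    also have "\<dots> = -A/2" by (simp add: field_simps)
    finally show ?thesis .
  qed
  hence "t * B \<le> -A/2" by (smt (verit) mult_left_mono t0 abs_ge_self)
  hence "A + t * B < 0" using A by simp
  hence "t * (A + t * B) < 0" using t0 by (simp add: mult_pos_neg)
  moreover have "0 \<le> t * (A + t*B)" using assms[OF t0 t1] by (simp add: algebra_simps power2_eq_square)
  ultimately show False by simp
qed

lemma arg_min_on_exI:
  fixes \<Phi> :: "'a \<Rightarrow> real"
  assumes "\<exists>y\<in>X. \<forall>z\<in>X. \<Phi> y \<le> \<Phi> z"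
  shows "arg_min_on \<Phi> X \<in> X \<and> (\<forall>z\<in>X. \<Phi> (arg_min_on \<Phi> X) \<le> \<Phi> z)"
proof -
  from assms obtain y where y: "is_arg_min \<Phi> (\<lambda>x. x \<in> X) y"
    unfolding is_arg_min_def by (auto simp: not_less)
  hence "is_arg_min \<Phi> (\<lambda>x. x \<in> X) (arg_min_on \<Phi> X)"
    unfolding arg_min_on_def arg_min_def by (rule someI)
  thus ?thesis unfolding is_arg_min_def by (auto simp: not_less)
qed

definition qobj :: "real^'n \<Rightarrow> real \<Rightarrow> real^'n \<Rightarrow> real^'n \<Rightarrow> real^'n \<Rightarrow> real" where
  "qobj g K h b z = inner g z + K * (\<Sum>i\<in>UNIV. h$i * (z$i - b$i)^2)"

lemma qobj_exists:
  fixes g h b :: "real^'n"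
  assumes hpos: "\<forall>i. 0 < h$i" and K: "0 < K" and X: "closed X" "X \<noteq> {}"
  shows "\<exists>y\<in>X. \<forall>z\<in>X. qobj g K h b y \<le> qobj g K h b z"
proof -
  define D where "D = (\<lambda>z::real^'n. \<chi> i. sqrt (h$i) * z$i)"
  define c where "c = (\<chi> i. sqrt (h$i) * (b$i - g$i / (2*K*h$i)))"
  define C where "C = (\<Sum>i\<in>UNIV. g$i * b$i - (g$i)^2 / (4*K*h$i))"
  have lin: "linear D" unfolding D_def
    by (rule linearI) (auto simp: vec_eq_iff algebra_simps)
  have inj: "inj D" unfolding D_def inj_def
    using hpos by (auto simp: vec_eq_iff) (metis less_numeral_extra(3) real_sqrt_eq_zero_cancel_iff)
  have cl: "closed (D ` X)" by (rule closed_injective_linear_image[OF X(1) lin inj])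
  have ne: "D ` X \<noteq> {}" using X by auto
  obtain w where w: "w \<in> D ` X" "\<And>v. v \<in> D ` X \<Longrightarrow> dist c w \<le> dist c v"
    using distance_attains_inf[OF cl ne] by blast
  have eq: "qobj g K h b z = K * (dist c (D z))^2 + C" for z
  proof -
    have "(dist c (D z))^2 = (\<Sum>i\<in>UNIV. (sqrt (h$i) * z$i - c$i)^2)"
      unfolding dist_norm sq_norm_vec by (simp add: D_def power2_commute)
    hence "K * (dist c (D z))^2 + C = (\<Sum>i\<in>UNIV. K * (sqrt (h$i) * z$i - c$i)^2 + (g$i * b$i - (g$i)^2 / (4*K*h$i)))"
      by (simp add: C_def sum_distrib_left sum.distrib)
    also have "\<dots> = (\<Sum>i\<in>UNIV. g$i * z$i + K * (h$i * (z$i - b$i)^2))"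
    proof (rule sum.cong[OF refl])
      fix i
      have hi: "0 < h$i" using hpos by auto
      have s: "(sqrt (h$i))^2 = h$i" using hi by simp
      have "K * (sqrt (h$i) * z$i - c$i)^2 = K * h$i * (z$i - b$i + g$i/(2*K*h$i))^2"
        unfolding c_def using s by (simp add: power2_eq_square algebra_simps)
      also have "\<dots> = K * h$i * (z$i - b$i)^2 + g$i * (z$i - b$i) + (g$i)^2/(4*K*h$i)"
        using hi K by (simp add: power2_eq_square field_simps)
      finally show "K * (sqrt (h$i) * z$i - c$i)^2 + (g$i * b$i - (g$i)^2 / (4*K*h$i)) = g$i * z$i + K * (h$i * (z$i - b$i)^2)"
        by (simp add: algebra_simps)
    qed
    also have "\<dots> = qobj g K h b z"
      by (simp add: qobj_def inner_vec_def sum.distrib sum_distrib_left)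
    finally show ?thesis by simp
  qed
  from w obtain y where y: "y \<in> X" "w = D y" by auto
  have "qobj g K h b y \<le> qobj g K h b z" if "z \<in> X" for z
  proof -
    have "dist c (D y) \<le> dist c (D z)" using w(2)[of "D z"] that y by auto
    hence "(dist c (D y))^2 \<le> (dist c (D z))^2" by (simp add: power_mono)
    thus ?thesis unfolding eq using K by simp
  qed
  thus ?thesis using y by blast
qed

lemma qobj_VI:
  fixes g h b :: "real^'n"
  assumes hpos: "\<forall>i. 0 < h$i" and K: "0 < K" and X: "closed X" "convex X" "X \<noteq> {}"
  defines "y \<equiv> arg_min_on (qobj g K h b) X"
  shows "y \<in> X" "\<And>z. z \<in> X \<Longrightarrow> 0 \<le> (\<Sum>i\<in>UNIV. (g$i + 2*K*h$i*(y$i - b$i)) * (z$i - y$i))"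
proof -
  have m: "y \<in> X \<and> (\<forall>z\<in>X. qobj g K h b y \<le> qobj g K h b z)"
    unfolding y_def by (rule arg_min_on_exI[OF qobj_exists[OF hpos K X(1) X(3)]])
  thus "y \<in> X" by simp
  fix z assume z: "z \<in> X"
  show "0 \<le> (\<Sum>i\<in>UNIV. (g$i + 2*K*h$i*(y$i - b$i)) * (z$i - y$i))"
  proof (rule small_t_lemma)
    fix t :: real assume t: "0 < t" "t \<le> 1"
    have mem: "y + t *\<^sub>R (z - y) \<in> X"
    proof -
      have "(1 - t) *\<^sub>R y + t *\<^sub>R z \<in> X"
        using X(2) m z t unfolding convex_def by auto
      moreover have "(1 - t) *\<^sub>R y + t *\<^sub>R z = y + t *\<^sub>R (z - y)" by (simp add: algebra_simps)
      ultimately show ?thesis by simp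
    qed
    have "qobj g K h b y \<le> qobj g K h b (y + t *\<^sub>R (z - y))" using m mem by blast
    moreover have "qobj g K h b (y + t *\<^sub>R (z - y)) - qobj g K h b y =
        t * (\<Sum>i\<in>UNIV. (g$i + 2*K*h$i*(y$i - b$i)) * (z$i - y$i)) + t^2 * (K * (\<Sum>i\<in>UNIV. h$i * (z$i - y$i)^2))"
      unfolding qobj_def inner_vec_def
      by (simp add: sum_distrib_left sum.distrib[symmetric] sum_subtractf[symmetric] power2_eq_square algebra_simps)
    ultimately show "0 \<le> t * (\<Sum>i\<in>UNIV. (g$i + 2*K*h$i*(y$i - b$i)) * (z$i - y$i)) + t^2 * (K * (\<Sum>i\<in>UNIV. h$i * (z$i - y$i)^2))"
      by linarith
  qed
qed

definition vi :: "(real^'n) set \<Rightarrow> real^'n \<Rightarrow> real^'n \<Rightarrow> real \<Rightarrow> real^'n \<Rightarrow> real^'n \<Rightarrow> bool" where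
  "vi X h x \<alpha> g P \<longleftrightarrow> x - \<alpha> *\<^sub>R P \<in> X \<and>
     (\<forall>z\<in>X. 0 \<le> (\<Sum>i\<in>UNIV. (g$i - h$i * P$i) * (z$i - (x - \<alpha> *\<^sub>R P)$i)))"

lemma vi_firm:
  assumes "vi X h x \<alpha> g1 P1" "vi X h x \<alpha> g2 P2" "0 < \<alpha>"
  shows "(\<Sum>i\<in>UNIV. h$i * (P1$i - P2$i)^2) \<le> (\<Sum>i\<in>UNIV. (g1$i - g2$i) * (P1$i - P2$i))"
proof -
  have a: "0 \<le> (\<Sum>i\<in>UNIV. (g1$i - h$i * P1$i) * ((x - \<alpha> *\<^sub>R P2)$i - (x - \<alpha> *\<^sub>R P1)$i))"
    using assms(1,2) unfolding vi_def by blast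
  have b: "0 \<le> (\<Sum>i\<in>UNIV. (g2$i - h$i * P2$i) * ((x - \<alpha> *\<^sub>R P1)$i - (x - \<alpha> *\<^sub>R P2)$i))"
    using assms(1,2) unfolding vi_def by blast
  have "0 \<le> (\<Sum>i\<in>UNIV. (g1$i - h$i * P1$i) * ((x - \<alpha> *\<^sub>R P2)$i - (x - \<alpha> *\<^sub>R P1)$i))
          + (\<Sum>i\<in>UNIV. (g2$i - h$i * P2$i) * ((x - \<alpha> *\<^sub>R P1)$i - (x - \<alpha> *\<^sub>R P2)$i))"
    using a b by simp
  also have "\<dots> = \<alpha> * ((\<Sum>i\<in>UNIV. (g1$i - g2$i) * (P1$i - P2$i)) - (\<Sum>i\<in>UNIV. h$i * (P1$i - P2$i)^2))"
    by (simp add: sum.distrib[symmetric] sum_subtractf[symmetric] sum_distrib_left power2_eq_square algebra_simps)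
  finally show ?thesis using assms(3) by (simp add: zero_le_mult_iff)
qed

lemma vi_self:
  assumes "vi X h x \<alpha> g P" "0 < \<alpha>" "x \<in> X"
  shows "(\<Sum>i\<in>UNIV. h$i * (P$i)^2) \<le> (\<Sum>i\<in>UNIV. g$i * P$i)"
proof -
  have a: "0 \<le> (\<Sum>i\<in>UNIV. (g$i - h$i * P$i) * (x$i - (x - \<alpha> *\<^sub>R P)$i))"
    using assms unfolding vi_def by blast
  also have "\<dots> = \<alpha> * ((\<Sum>i\<in>UNIV. g$i * P$i) - (\<Sum>i\<in>UNIV. h$i * (P$i)^2))"
    by (simp add: sum_subtractf[symmetric] sum_distrib_left power2_eq_square algebra_simps)
  finally show ?thesis using assms(2) by (simp add: zero_le_mult_iff)
qed

lemma wsum_amgm: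
  fixes h w r :: "real^'n"
  assumes hpos: "\<forall>i. 0 < h$i" and le: "(\<Sum>i\<in>UNIV. h$i * (r$i)^2) \<le> (\<Sum>i\<in>UNIV. w$i * r$i)"
  shows "(\<Sum>i\<in>UNIV. h$i * (r$i)^2) \<le> (\<Sum>i\<in>UNIV. (w$i)^2 / h$i)"
proof -
  have pt: "w$i * r$i \<le> h$i * (r$i)^2 / 2 + (w$i)^2 / (2 * h$i)" for i
  proof -
    have hi: "0 < h$i" using hpos by auto
    have "0 \<le> (h$i * r$i - w$i)^2 / (2 * h$i)" using hi by simp
    also have "(h$i * r$i - w$i)^2 / (2 * h$i) = h$i * (r$i)^2 / 2 + (w$i)^2 / (2 * h$i) - w$i * r$i"
      using hi by (simp add: power2_eq_square field_simps)
    finally show ?thesis by simp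
  qed
  have "(\<Sum>i\<in>UNIV. w$i * r$i) \<le> (\<Sum>i\<in>UNIV. h$i * (r$i)^2 / 2 + (w$i)^2 / (2 * h$i))"
    by (rule sum_mono) (rule pt)
  also have "\<dots> = (\<Sum>i\<in>UNIV. h$i * (r$i)^2) / 2 + (\<Sum>i\<in>UNIV. (w$i)^2 / h$i) / 2"
    by (simp add: sum.distrib sum_divide_distrib mult.commute)
  finally show ?thesis using le by simp
qed

lemma key_alg:
  fixes h e q p :: "real^'n"
  assumes hpos: "\<forall>i. 0 < h$i"
    and firm: "(\<Sum>i\<in>UNIV. h$i * (q$i - p$i)^2) \<le> (\<Sum>i\<in>UNIV. e$i * (q$i - p$i))"
  shows "- (1/2) * (\<Sum>i\<in>UNIV. h$i * (q$i)^2) + (\<Sum>i\<in>UNIV. e$i * q$i)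
         \<le> - (3/10) * (\<Sum>i\<in>UNIV. h$i * (p$i)^2) + (5/4) * (\<Sum>i\<in>UNIV. (e$i)^2 / h$i)"
proof -
  define r where "r = q - p"
  have pt: "- (1/2) * (h$i * (q$i)^2) + e$i * q$i + (3/10) * (h$i * (p$i)^2) - (5/4) * ((e$i)^2 / h$i)
        \<le> (-3/2) * (e$i * r$i) + (3/4) * (h$i * (r$i)^2)" for i
  proof -
    have hi: "0 < h$i" using hpos by auto
    have qe: "q$i = p$i + r$i" by (simp add: r_def)
    have "0 \<le> (2 * h$i * p$i - 5 * (e$i - h$i * r$i))^2 / (20 * h$i)" using hi by simp
    moreover have "(2 * h$i * p$i - 5 * (e$i - h$i * r$i))^2 / (20 * h$i)
       = (-3/2) * (e$i * r$i) + (3/4) * (h$i * (r$i)^2) - (- (1/2) * (h$i * (q$i)^2) + e$i * q$i + (3/10) * (h$i * (p$i)^2) - (5/4) * ((e$i)^2 / h$i))"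
      unfolding qe using hi by (simp add: power2_eq_square field_simps)
    ultimately show ?thesis by linarith
  qed
  have "- (1/2) * (\<Sum>i\<in>UNIV. h$i * (q$i)^2) + (\<Sum>i\<in>UNIV. e$i * q$i) + (3/10) * (\<Sum>i\<in>UNIV. h$i * (p$i)^2) - (5/4) * (\<Sum>i\<in>UNIV. (e$i)^2 / h$i)
     = (\<Sum>i\<in>UNIV. - (1/2) * (h$i * (q$i)^2) + e$i * q$i + (3/10) * (h$i * (p$i)^2) - (5/4) * ((e$i)^2 / h$i))"
    by (simp add: sum.distrib sum_subtractf sum_distrib_left sum_negf sum_divide_distrib)
  also have "\<dots> \<le> (\<Sum>i\<in>UNIV. (-3/2) * (e$i * r$i) + (3/4) * (h$i * (r$i)^2))"
    by (rule sum_mono) (rule pt)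
  also have "\<dots> = (-3/2) * (\<Sum>i\<in>UNIV. e$i * r$i) + (3/4) * (\<Sum>i\<in>UNIV. h$i * (r$i)^2)"
    by (simp only: sum.distrib sum_distrib_left)
  also have "\<dots> \<le> 0"
  proof -
    have "0 \<le> (\<Sum>i\<in>UNIV. h$i * (r$i)^2)" using hpos by (intro sum_nonneg) (simp add: less_imp_le)
    thus ?thesis using firm unfolding r_def by simp
  qed
  finally show ?thesis by simp
qed

lemma split_sq:
  fixes h P p :: "real^'n"
  assumes hpos: "\<forall>i. 0 < h$i"
  shows "(\<Sum>i\<in>UNIV. h$i * (P$i)^2) \<le> (9/5) * (\<Sum>i\<in>UNIV. h$i * (p$i)^2) + (9/4) * (\<Sum>i\<in>UNIV. h$i * (P$i - p$i)^2)"
proof -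
  have pt: "h$i * (P$i)^2 \<le> (9/5) * (h$i * (p$i)^2) + (9/4) * (h$i * (P$i - p$i)^2)" for i
  proof -
    have hi: "0 < h$i" using hpos by auto
    have "0 \<le> h$i * ((4/5) * p$i - (P$i - p$i))^2 * (5/4)" using hi by simp
    moreover have "h$i * ((4/5) * p$i - (P$i - p$i))^2 * (5/4) = (9/5) * (h$i * (p$i)^2) + (9/4) * (h$i * (P$i - p$i)^2) - h$i * (P$i)^2"
      by (simp add: power2_eq_square field_simps)
    ultimately show ?thesis by linarith
  qed
  have "(\<Sum>i\<in>UNIV. h$i * (P$i)^2) \<le> (\<Sum>i\<in>UNIV. (9/5) * (h$i * (p$i)^2) + (9/4) * (h$i * (P$i - p$i)^2))"
    by (rule sum_mono) (rule pt)
  also have "\<dots> = (9/5) * (\<Sum>i\<in>UNIV. h$i * (p$i)^2) + (9/4) * (\<Sum>i\<in>UNIV. h$i * (P$i - p$i)^2)"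
    by (simp add: sum.distrib sum_distrib_left)
  finally show ?thesis .
qed

lemma inv_weight_le:
  fixes h e :: "real^'n"
  assumes "\<forall>i. c \<le> h$i" "0 < c"
  shows "(\<Sum>i\<in>UNIV. (e$i)^2 / h$i) \<le> (norm e)^2 / c"
proof -
  have "(\<Sum>i\<in>UNIV. (e$i)^2 / h$i) \<le> (\<Sum>i\<in>UNIV. (e$i)^2 / c)"
    by (rule sum_mono) (use assms in \<open>auto intro!: divide_left_mono mult_pos_pos dest: order_less_le_trans\<close>)
  also have "\<dots> = (norm e)^2 / c" by (simp add: sq_norm_vec sum_divide_distrib)
  finally show ?thesis .
qed

lemma telescope_1T:
  fixes a :: "nat \<Rightarrow> real"
  shows "(\<Sum>t\<in>{1..T}. a t - a (Suc t)) = a 1 - a (Suc T)"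
  by (induction T) auto

lemma pathwise_step:
  fixes x y g Gm p :: "real^'n" and fm :: "real^'n \<Rightarrow> real"
  assumes hc: "\<forall>i. c \<le> h$i" and c: "0 < c" and al: "0 < \<alpha>" "\<alpha> * L \<le> c" and L: "0 \<le> L"
    and desc: "fm y \<le> fm x + inner Gm (y - x) + L/2 * (norm (y - x))^2"
    and xX: "x \<in> X"
    and viq: "vi X h x \<alpha> g ((1/\<alpha>) *\<^sub>R (x - y))"
    and vip: "vi X h x \<alpha> Gm p"
  shows "fm y \<le> fm x - \<alpha> * (3/10) * (\<Sum>i\<in>UNIV. h$i * (p$i)^2) + \<alpha> * (5/4) * ((norm (g - Gm))^2 / c)"
proof -
  define q where "q = (1/\<alpha>) *\<^sub>R (x - y)"
  have hpos: "\<forall>i. 0 < h$i" using hc c by (auto intro: less_le_trans)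
  have yq: "y - x = - \<alpha> *\<^sub>R q" using al by (simp add: q_def algebra_simps)
  have s1: "(\<Sum>i\<in>UNIV. h$i * (q$i)^2) \<le> (\<Sum>i\<in>UNIV. g$i * q$i)"
    using vi_self[OF viq[folded q_def] al(1) xX] .
  have s2: "(\<Sum>i\<in>UNIV. h$i * (q$i - p$i)^2) \<le> (\<Sum>i\<in>UNIV. (g$i - Gm$i) * (q$i - p$i))"
    using vi_firm[OF viq[folded q_def] vip al(1)] .
  have ka: "- (1/2) * (\<Sum>i\<in>UNIV. h$i * (q$i)^2) + (\<Sum>i\<in>UNIV. (g - Gm)$i * q$i)
         \<le> - (3/10) * (\<Sum>i\<in>UNIV. h$i * (p$i)^2) + (5/4) * (\<Sum>i\<in>UNIV. ((g - Gm)$i)^2 / h$i)"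
    by (rule key_alg[OF hpos]) (use s2 in simp)
  have iw: "(\<Sum>i\<in>UNIV. ((g - Gm)$i)^2 / h$i) \<le> (norm (g - Gm))^2 / c"
    by (rule inv_weight_le[OF hc c])
  have quad: "L/2 * (norm (y - x))^2 \<le> \<alpha>/2 * (\<Sum>i\<in>UNIV. h$i * (q$i)^2)"
  proof -
    have "L/2 * (norm (y - x))^2 = (\<Sum>i\<in>UNIV. L/2 * \<alpha>^2 * (q$i)^2)"
      unfolding yq sq_norm_vec by (simp add: sum_distrib_left power2_eq_square algebra_simps)
    also have "\<dots> \<le> (\<Sum>i\<in>UNIV. \<alpha>/2 * (h$i * (q$i)^2))"
    proof (rule sum_mono)
      fix i
      have "\<alpha> * L \<le> h$i" using hc al by (meson order_trans)
      hence "\<alpha> * (\<alpha> * L) * (q$i)^2 \<le> \<alpha> * h$i * (q$i)^2"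
        using al by (intro mult_right_mono mult_left_mono) auto
      thus "L/2 * \<alpha>^2 * (q$i)^2 \<le> \<alpha>/2 * (h$i * (q$i)^2)"
        by (simp add: power2_eq_square algebra_simps)
    qed
    also have "\<dots> = \<alpha>/2 * (\<Sum>i\<in>UNIV. h$i * (q$i)^2)" by (simp add: sum_distrib_left)
    finally show ?thesis .
  qed
  have lin: "inner Gm (y - x) = - \<alpha> * (\<Sum>i\<in>UNIV. g$i * q$i) + \<alpha> * (\<Sum>i\<in>UNIV. (g - Gm)$i * q$i)"
    unfolding yq inner_vec_def
    by (simp add: sum_distrib_left sum.distrib[symmetric] sum_negf[symmetric] algebra_simps)
  have "fm y \<le> fm x + \<alpha> * (- (1/2) * (\<Sum>i\<in>UNIV. h$i * (q$i)^2) + (\<Sum>i\<in>UNIV. (g - Gm)$i * q$i))"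
  proof -
    have "\<alpha> * (\<Sum>i\<in>UNIV. h$i * (q$i)^2) \<le> \<alpha> * (\<Sum>i\<in>UNIV. g$i * q$i)"
      using s1 al(1) by (intro mult_left_mono) auto
    thus ?thesis using desc lin quad by (simp add: algebra_simps)
  qed
  also have "\<dots> \<le> fm x + \<alpha> * (- (3/10) * (\<Sum>i\<in>UNIV. h$i * (p$i)^2) + (5/4) * ((norm (g - Gm))^2 / c))"
    using ka iw al(1) by (intro add_left_mono mult_left_mono) auto
  finally show ?thesis by (simp add: algebra_simps)
qed

lemma gmap_err:
  fixes x Gf Gm P p :: "real^'n"
  assumes hc: "\<forall>i. c \<le> h$i" and c: "0 < c" and al: "0 < \<alpha>"
    and viP: "vi X h x \<alpha> Gf P" and vip: "vi X h x \<alpha> Gm p"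
  shows "(\<Sum>i\<in>UNIV. h$i * (P$i)^2) \<le> (9/5) * (\<Sum>i\<in>UNIV. h$i * (p$i)^2) + (9/4) * ((norm (Gf - Gm))^2 / c)"
proof -
  have hpos: "\<forall>i. 0 < h$i" using hc c by (auto intro: less_le_trans)
  have f: "(\<Sum>i\<in>UNIV. h$i * (P$i - p$i)^2) \<le> (\<Sum>i\<in>UNIV. (Gf$i - Gm$i) * (P$i - p$i))"
    using vi_firm[OF viP vip al] .
  have "(\<Sum>i\<in>UNIV. h$i * ((P - p)$i)^2) \<le> (\<Sum>i\<in>UNIV. ((Gf - Gm)$i)^2 / h$i)"
    by (rule wsum_amgm[OF hpos]) (use f in simp)
  also have "\<dots> \<le> (norm (Gf - Gm))^2 / c" by (rule inv_weight_le[OF hc c])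
  finally have "(\<Sum>i\<in>UNIV. h$i * (P$i - p$i)^2) \<le> (norm (Gf - Gm))^2 / c" by simp
  thus ?thesis using split_sq[OF hpos, of P p] by linarith
qed

lemma pathwise_sum:
  fixes x g p P :: "nat \<Rightarrow> real^'n" and h :: "nat \<Rightarrow> real^'n"
    and fm :: "real^'n \<Rightarrow> real" and Gm Gf :: "real^'n \<Rightarrow> real^'n"
  assumes c: "0 < c" and al: "0 < \<alpha>" "\<alpha> * L \<le> c" and L: "0 \<le> L"
    and desc: "\<And>x y. fm y \<le> fm x + inner (Gm x) (y - x) + L/2 * (norm (y - x))^2"
    and hc: "\<And>t. t \<in> {1..T} \<Longrightarrow> \<forall>i. c \<le> h t $ i"
    and xX: "\<And>t. t \<in> {1..T} \<Longrightarrow> x t \<in> X"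
    and viq: "\<And>t. t \<in> {1..T} \<Longrightarrow> vi X (h t) (x t) \<alpha> (g t) ((1/\<alpha>) *\<^sub>R (x t - x (Suc t)))"
    and vip: "\<And>t. t \<in> {1..T} \<Longrightarrow> vi X (h t) (x t) \<alpha> (Gm (x t)) (p t)"
    and viP: "\<And>t. t \<in> {1..T} \<Longrightarrow> vi X (h t) (x t) \<alpha> (Gf (x t)) (P t)"
    and B: "\<And>t. t \<in> {1..T} \<Longrightarrow> (norm (Gf (x t) - Gm (x t)))^2 \<le> B"
    and Df: "fm (x 1) - fm (x (Suc T)) \<le> Df"
  shows "(\<Sum>t\<in>{1..T}. \<Sum>i\<in>UNIV. h t $ i * (P t $ i)^2)
          \<le> 6 * Df / \<alpha> + (15/2) / c * (\<Sum>t\<in>{1..T}. (norm (g t - Gm (x t)))^2) + real T * (9/4) * B / c"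
proof -
  define S where "S t = (\<Sum>i\<in>UNIV. h t $ i * (p t $ i)^2)" for t
  define E where "E t = (norm (g t - Gm (x t)))^2" for t
  have step: "fm (x (Suc t)) \<le> fm (x t) - \<alpha> * (3/10) * S t + \<alpha> * (5/4) * (E t / c)" if t: "t \<in> {1..T}" for t
    unfolding S_def E_def
    by (rule pathwise_step[OF hc[OF t] c al L desc xX[OF t] viq[OF t] vip[OF t]])
  have G: "(\<Sum>i\<in>UNIV. h t $ i * (P t $ i)^2) \<le> (9/5) * S t + (9/4) * (B / c)" if t: "t \<in> {1..T}" for t
  proof -
    have "(\<Sum>i\<in>UNIV. h t $ i * (P t $ i)^2) \<le> (9/5) * S t + (9/4) * ((norm (Gf (x t) - Gm (x t)))^2 / c)"
      unfolding S_def by (rule gmap_err[OF hc[OF t] c al(1) viP[OF t] vip[OF t]])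
    also have "\<dots> \<le> (9/5) * S t + (9/4) * (B / c)"
      using B[OF t] c by (intro add_left_mono mult_left_mono divide_right_mono) auto
    finally show ?thesis .
  qed
  have "\<alpha> * (3/10) * (\<Sum>t\<in>{1..T}. S t) \<le> (\<Sum>t\<in>{1..T}. fm (x t) - fm (x (Suc t))) + \<alpha> * (5/4) / c * (\<Sum>t\<in>{1..T}. E t)"
  proof -
    have "(\<Sum>t\<in>{1..T}. \<alpha> * (3/10) * S t) \<le> (\<Sum>t\<in>{1..T}. (fm (x t) - fm (x (Suc t))) + \<alpha> * (5/4) / c * E t)"
      by (rule sum_mono) (use step in fastforce)
    thus ?thesis by (simp add: sum.distrib sum_distrib_left)
  qed
  also have "\<dots> \<le> Df + \<alpha> * (5/4) / c * (\<Sum>t\<in>{1..T}. E t)"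
    using Df telescope_1T[of "\<lambda>t. fm (x t)" T] by linarith
  finally have SS: "\<alpha> * (3/10) * (\<Sum>t\<in>{1..T}. S t) \<le> Df + \<alpha> * (5/4) / c * (\<Sum>t\<in>{1..T}. E t)" .
  hence SS': "(\<Sum>t\<in>{1..T}. S t) \<le> (10/3) * Df / \<alpha> + (25/6) / c * (\<Sum>t\<in>{1..T}. E t)"
    using al(1) by (simp add: field_simps)
  have "(\<Sum>t\<in>{1..T}. \<Sum>i\<in>UNIV. h t $ i * (P t $ i)^2) \<le> (\<Sum>t\<in>{1..T}. (9/5) * S t + (9/4) * (B / c))"
    by (rule sum_mono) (rule G)
  also have "\<dots> = (9/5) * (\<Sum>t\<in>{1..T}. S t) + real T * ((9/4) * (B / c))"
    by (simp add: sum.distrib sum_distrib_left)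
  also have "\<dots> \<le> (9/5) * ((10/3) * Df / \<alpha> + (25/6) / c * (\<Sum>t\<in>{1..T}. E t)) + real T * ((9/4) * (B / c))"
    using SS' by simp
  also have "\<dots> = 6 * Df / \<alpha> + (15/2) / c * (\<Sum>t\<in>{1..T}. E t) + real T * (9/4) * B / c"
    by (simp add: field_simps)
  finally show ?thesis unfolding E_def .
qed

lemma grad_eqI:
  fixes \<phi> :: "real^'n \<Rightarrow> real"
  assumes "(\<phi> has_derivative (\<lambda>h. inner h D)) (at x)"
  shows "grad \<phi> x = D"
proof -
  have "GDERIV \<phi> x :> D" using assms by (simp add: gderiv_def)
  hence "GDERIV \<phi> x :> grad \<phi> x" unfolding grad_def by (rule someI)
  hence d2: "(\<phi> has_derivative (\<lambda>h. inner h (grad \<phi> x))) (at x)" by (simp add: gderiv_def)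
  have "(\<lambda>h. inner h D) = (\<lambda>h. inner h (grad \<phi> x))"
    by (rule has_derivative_unique[OF assms d2])
  hence "inner (D - grad \<phi> x) D = inner (D - grad \<phi> x) (grad \<phi> x)" by metis
  hence "inner (D - grad \<phi> x) (D - grad \<phi> x) = 0" by (simp add: inner_diff_right)
  thus ?thesis by simp
qed

lemma grad_exists:
  fixes \<phi> :: "real^'n \<Rightarrow> real"
  assumes "\<phi> differentiable (at x)"
  shows "(\<phi> has_derivative (\<lambda>h. inner h (grad \<phi> x))) (at x)"
proof -
  from assms obtain D where D: "(\<phi> has_derivative D) (at x)" unfolding differentiable_def by blast
  have lin: "linear D" using has_derivative_linear[OF D] .
  define v :: "real^'n" where "v = (\<Sum>i\<in>Basis. D i *\<^sub>R i)"
  have "D h = inner h v" for h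
  proof -
    have "D h \<bullet> 1 = (\<Sum>i\<in>Basis. (h\<bullet>i) * (D i \<bullet> 1))" by (rule Linear_Algebra.linear_componentwise[OF lin])
    thus ?thesis by (simp add: v_def inner_sum_right mult.commute)
  qed
  hence Dv: "D = (\<lambda>h. inner h v)" by auto
  have "grad \<phi> x = v" by (rule grad_eqI) (use D Dv in simp)
  thus ?thesis using D Dv by simp
qed

lemma line_deriv:
  fixes \<phi> :: "real^'n \<Rightarrow> real"
  assumes "(\<phi> has_derivative (\<lambda>h. inner h D)) (at (x + t *\<^sub>R w))"
  shows "((\<lambda>t. \<phi> (x + t *\<^sub>R w)) has_real_derivative inner w D) (at t)"
proof -
  have a: "((\<lambda>t. x + t *\<^sub>R w) has_derivative (\<lambda>s. s *\<^sub>R w)) (at t)"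
    by (auto intro!: derivative_eq_intros)
  have "((\<lambda>t. \<phi> (x + t *\<^sub>R w)) has_derivative (\<lambda>s. inner (s *\<^sub>R w) D)) (at t)"
    by (rule has_derivative_compose[OF a assms])
  moreover have "(\<lambda>s. inner (s *\<^sub>R w) D) = (*) (inner w D)" by (auto simp: mult.commute)
  ultimately show ?thesis by (simp add: has_field_derivative_def)
qed

lemma lip_quad:
  fixes \<phi> :: "real^'n \<Rightarrow> real" and D :: "real^'n \<Rightarrow> real^'n"
  assumes der: "\<And>x. (\<phi> has_derivative (\<lambda>h. inner h (D x))) (at x)"
    and lip: "\<And>x y. norm (D x - D y) \<le> L * norm (x - y)"
  shows "\<bar>\<phi> y - \<phi> x - inner (D x) (y - x)\<bar> \<le> L/2 * (norm (y - x))^2"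
proof -
  define w where "w = y - x"
  have dpsi: "((\<lambda>t. \<phi> (x + t *\<^sub>R w)) has_real_derivative inner w (D (x + t *\<^sub>R w))) (at t)" for t
    by (rule line_deriv[OF der])
  have bnd: "\<bar>inner w (D (x + t *\<^sub>R w)) - inner w (D x)\<bar> \<le> L * t * (norm w)^2" if "0 \<le> t" for t
  proof -
    have "\<bar>inner w (D (x + t *\<^sub>R w)) - inner w (D x)\<bar> = \<bar>inner w (D (x + t *\<^sub>R w) - D x)\<bar>"
      by (simp add: inner_diff_right)
    also have "\<dots> \<le> norm w * norm (D (x + t *\<^sub>R w) - D x)" by (rule Cauchy_Schwarz_ineq2)
    also have "\<dots> \<le> norm w * (L * norm (t *\<^sub>R w))"
      using lip[of "x + t *\<^sub>R w" x] by (intro mult_left_mono) auto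
    also have "\<dots> = L * t * (norm w)^2" using that by (simp add: power2_eq_square)
    finally show ?thesis .
  qed
  define u where "u t = \<phi> (x + t *\<^sub>R w) - t * inner w (D x) - L/2 * t^2 * (norm w)^2" for t
  define l where "l t = \<phi> (x + t *\<^sub>R w) - t * inner w (D x) + L/2 * t^2 * (norm w)^2" for t
  have du: "(u has_real_derivative (inner w (D (x + t *\<^sub>R w)) - inner w (D x) - L * t * (norm w)^2)) (at t)" for t
    unfolding u_def by (rule derivative_eq_intros dpsi refl | simp)+
  have dl: "(l has_real_derivative (inner w (D (x + t *\<^sub>R w)) - inner w (D x) + L * t * (norm w)^2)) (at t)" for t
    unfolding l_def by (rule derivative_eq_intros dpsi refl | simp)+
  have "u 1 \<le> u 0"
    by (rule DERIV_nonpos_imp_nonincreasing[of 0 1]) (use du bnd in \<open>fastforce+\<close>)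
  moreover have "l 0 \<le> l 1"
    by (rule DERIV_nonneg_imp_nondecreasing[of 0 1]) (use dl bnd in \<open>fastforce+\<close>)
  ultimately have "\<phi> y - \<phi> x - inner (D x) (y - x) \<le> L/2 * (norm (y - x))^2"
      "-(\<phi> y - \<phi> x - inner (D x) (y - x)) \<le> L/2 * (norm (y - x))^2"
    unfolding u_def l_def w_def by (simp_all add: inner_commute)
  thus ?thesis by (simp only: abs_le_iff)
qed

lemma deriv_from_quad:
  fixes \<phi> :: "real^'n \<Rightarrow> real"
  assumes q: "\<And>y. \<bar>\<phi> y - \<phi> x - inner D (y - x)\<bar> \<le> L/2 * (norm (y - x))^2"
  shows "(\<phi> has_derivative (\<lambda>h. inner h D)) (at x)"
  unfolding has_derivative_at_alt
proof (intro conjI allI impI)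
  show "bounded_linear (\<lambda>h. inner h D)" by (rule bounded_linear_inner_left)
  fix e :: real assume e: "0 < e"
  define d where "d = 2 * e / (\<bar>L\<bar> + 1)"
  have d: "0 < d" using e by (simp add: d_def)
  have "\<forall>y. norm (y - x) < d \<longrightarrow> norm (\<phi> y - \<phi> x - inner (y - x) D) \<le> e * norm (y - x)"
  proof (intro allI impI)
    fix y assume y: "norm (y - x) < d"
    have "L/2 * norm (y - x) \<le> \<bar>L\<bar>/2 * d" using y by (intro mult_mono) auto
    also have "\<dots> \<le> e" using e unfolding d_def by (simp add: field_simps)
    finally have a: "L/2 * norm (y - x) \<le> e" .
    have "norm (\<phi> y - \<phi> x - inner (y - x) D) \<le> L/2 * (norm (y - x))^2"
      using q[of y] by (simp add: inner_commute)
    also have "\<dots> = (L/2 * norm (y - x)) * norm (y - x)" by (simp add: power2_eq_square)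
    also have "\<dots> \<le> e * norm (y - x)" using a by (intro mult_right_mono) auto
    finally show "norm (\<phi> y - \<phi> x - inner (y - x) D) \<le> e * norm (y - x)" .
  qed
  thus "\<exists>d>0. \<forall>y. norm (y - x) < d \<longrightarrow> norm (\<phi> y - \<phi> x - inner (y - x) D) \<le> e * norm (y - x)"
    using d by blast
qed

lemma int_quad:
  fixes \<Phi> :: "real^'n \<Rightarrow> 'a \<Rightarrow> real" and D\<Phi> :: "real^'n \<Rightarrow> 'a \<Rightarrow> real^'n"
  assumes M: "prob_space M"
    and int: "\<And>x. integrable M (\<Phi> x)"
    and dint: "\<And>x. integrable M (D\<Phi> x)"
    and quad: "\<And>x y s. s \<in> space M \<Longrightarrow> \<bar>\<Phi> y s - \<Phi> x s - inner (D\<Phi> x s) (y - x)\<bar> \<le> L/2 * (norm (y - x))^2"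
  shows "\<bar>(\<integral>s. \<Phi> y s \<partial>M) - (\<integral>s. \<Phi> x s \<partial>M) - inner (\<integral>s. D\<Phi> x s \<partial>M) (y - x)\<bar> \<le> L/2 * (norm (y - x))^2"
proof -
  interpret prob_space M by (rule M)
  have i2: "integrable M (\<lambda>s. inner (D\<Phi> x s) (y - x))"
    by (intro integrable_inner_left dint)
  have "(\<integral>s. \<Phi> y s \<partial>M) - (\<integral>s. \<Phi> x s \<partial>M) - inner (\<integral>s. D\<Phi> x s \<partial>M) (y - x)
      = (\<integral>s. \<Phi> y s - \<Phi> x s - inner (D\<Phi> x s) (y - x) \<partial>M)"
    using int dint i2 by (simp add: integral_diff integral_inner_left)
  also have "\<bar>\<dots>\<bar> \<le> (\<integral>s. \<bar>\<Phi> y s - \<Phi> x s - inner (D\<Phi> x s) (y - x)\<bar> \<partial>M)"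
    by (rule integral_abs_bound)
  also have "\<dots> \<le> (\<integral>s. L/2 * (norm (y - x))^2 \<partial>M)"
    using int dint i2 quad by (intro integral_mono) auto
  also have "\<dots> = L/2 * (norm (y - x))^2" by (simp add: prob_space)
  finally show ?thesis .
qed

lemma int_lip:
  fixes D\<Phi> :: "real^'n \<Rightarrow> 'a \<Rightarrow> real^'n"
  assumes M: "prob_space M"
    and dint: "\<And>x. integrable M (D\<Phi> x)"
    and lip: "\<And>x y s. s \<in> space M \<Longrightarrow> norm (D\<Phi> x s - D\<Phi> y s) \<le> L * norm (x - y)"
  shows "norm ((\<integral>s. D\<Phi> x s \<partial>M) - (\<integral>s. D\<Phi> y s \<partial>M)) \<le> L * norm (x - y)"
proof -
  interpret prob_space M by (rule M)
  have "norm ((\<integral>s. D\<Phi> x s \<partial>M) - (\<integral>s. D\<Phi> y s \<partial>M)) = norm (\<integral>s. D\<Phi> x s - D\<Phi> y s \<partial>M)"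
    using dint by (simp add: integral_diff)
  also have "\<dots> \<le> (\<integral>s. norm (D\<Phi> x s - D\<Phi> y s) \<partial>M)" by (rule integral_norm_bound)
  also have "\<dots> \<le> (\<integral>s. L * norm (x - y) \<partial>M)"
    using dint lip by (intro integral_mono) auto
  also have "\<dots> = L * norm (x - y)" by (simp add: prob_space)
  finally show ?thesis .
qed

lemma int_bound:
  fixes D\<Phi> :: "'a \<Rightarrow> real^'n"
  assumes M: "prob_space M"
    and b: "\<And>s. s \<in> space M \<Longrightarrow> norm (D\<Phi> s) \<le> K"
  shows "norm (\<integral>s. D\<Phi> s \<partial>M) \<le> K"
proof (cases "integrable M D\<Phi>")
  case True
  interpret prob_space M by (rule M)
  have "norm (\<integral>s. D\<Phi> s \<partial>M) \<le> (\<integral>s. norm (D\<Phi> s) \<partial>M)" by (rule integral_norm_bound)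
  also have "\<dots> \<le> (\<integral>s. K \<partial>M)" using True b by (intro integral_mono) auto
  also have "\<dots> = K" by (simp add: prob_space)
  finally show ?thesis .
next
  case False
  interpret prob_space M by (rule M)
  obtain s where "s \<in> space M" using not_empty by blast
  hence "0 \<le> K" using b[of s] norm_ge_zero order_trans by blast
  thus ?thesis using False by (simp add: not_integrable_integral_eq)
qed

lemma unif_ball_prob: "prob_space (unif_ball :: (real^'n) measure)"
proof -
  have pos: "0 < measure lborel (ball (0::real^'n) 1)" by (rule content_ball_pos) simp
  have fin: "emeasure lborel (ball (0::real^'n) 1) < \<infinity>" by (rule emeasure_lborel_ball_finite)
  have "emeasure lborel (ball (0::real^'n) 1) = ennreal (measure lborel (ball (0::real^'n) 1))"
    using fin by (simp add: emeasure_eq_ennreal_measure)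
  hence "emeasure lborel (ball (0::real^'n) 1) \<noteq> 0" using pos by simp
  thus ?thesis unfolding unif_ball_def using fin by (intro prob_space_uniform_measure) auto
qed

lemma sets_unif_ball[simp, measurable_cong]: "sets (unif_ball :: (real^'n) measure) = sets borel"
  by (simp add: unif_ball_def)

lemma space_unif_ball[simp]: "space (unif_ball :: (real^'n) measure) = UNIV"
  by (simp add: unif_ball_def)

lemma AE_unif_ball: "AE v in (unif_ball :: (real^'n) measure). norm v < 1"
  unfolding unif_ball_def by (rule AE_uniform_measureI) auto

lemma seq_at0: "filterlim (\<lambda>n::nat. 1 / real (Suc n)) (at (0::real)) sequentially"
proof -
  have "(\<lambda>n::nat. 1 / real (Suc n)) \<longlonglongrightarrow> 0" by (rule LIMSEQ_Suc[OF lim_const_over_n]) 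
  thus ?thesis unfolding filterlim_at by auto
qed

locale zo =
  fixes F :: "real^'n \<Rightarrow> 's \<Rightarrow> real" and P :: "'s measure" and L \<eta> :: real
  assumes P: "prob_space P"
    and F_meas: "(\<lambda>(x, s). F x s) \<in> borel_measurable (borel \<Otimes>\<^sub>M P)"
    and F_int: "\<And>x. integrable P (F x)"
    and A1_diff: "\<And>s x. s \<in> space P \<Longrightarrow> (\<lambda>z. F z s) differentiable (at x)"
    and A1_lip: "\<And>s x y. s \<in> space P \<Longrightarrow>
                   norm (grad (\<lambda>z. F z s) x - grad (\<lambda>z. F z s) y) \<le> L * norm (x - y)"
    and A2: "\<And>s x. s \<in> space P \<Longrightarrow> infnorm (grad (\<lambda>z. F z s) x) \<le> \<eta>"
    and L_pos: "0 < L"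
begin

definition "DF x s = grad (\<lambda>z. F z s) x"
definition "f x = (\<integral>s. F x s \<partial>P)"
definition "Gf x = (\<integral>s. DF x s \<partial>P)"

lemma DF_deriv: "s \<in> space P \<Longrightarrow> ((\<lambda>z. F z s) has_derivative (\<lambda>h. inner h (DF x s))) (at x)"
  unfolding DF_def by (rule grad_exists[OF A1_diff])

lemma DF_quad:
  assumes s: "s \<in> space P"
  shows "\<bar>F y s - F x s - inner (DF x s) (y - x)\<bar> \<le> L/2 * (norm (y - x))^2"
  by (rule lip_quad[where D="\<lambda>x. DF x s"]) (use s in \<open>auto simp: DF_deriv A1_lip[unfolded DF_def[symmetric]]\<close>)

lemma DF_bound: "s \<in> space P \<Longrightarrow> norm (DF x s) \<le> real CARD('n) * \<eta>"
proof -
  assume s: "s \<in> space P"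
  have "norm (DF x s) \<le> (\<Sum>i\<in>UNIV. \<bar>DF x s $ i\<bar>)" by (rule norm_le_l1_cart)
  also have "\<dots> \<le> (\<Sum>i\<in>(UNIV::'n set). \<eta>)"
    unfolding DF_def by (intro sum_mono order_trans[OF component_le_infnorm_cart A2[OF s]])
  finally show ?thesis by simp
qed

lemma F_meas_x: "F y \<in> borel_measurable P"
proof -
  show ?thesis using measurable_compose[OF measurable_Pair1'[of y borel P] F_meas] by simp
qed

lemma DF_meas: "(\<lambda>s. DF x s) \<in> borel_measurable P"
proof -
  have "(\<lambda>s. DF x s $ i) \<in> borel_measurable P" for i
  proof (rule borel_measurable_LIMSEQ_real[where u="\<lambda>n s. (F (x + (1 / real (Suc n)) *\<^sub>R axis i 1) s - F x s) / (1 / real (Suc n))"])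
    fix s assume s: "s \<in> space P"
    have "((\<lambda>t. F (x + t *\<^sub>R axis i 1) s) has_real_derivative inner (axis i 1) (DF (x + 0 *\<^sub>R axis i 1) s)) (at 0)"
      by (rule line_deriv[OF DF_deriv[OF s]])
    hence "((\<lambda>h. (F (x + (0 + h) *\<^sub>R axis i 1) s - F (x + 0 *\<^sub>R axis i 1) s) / h) \<longlongrightarrow> DF x s $ i) (at 0)"
      unfolding DERIV_def by (simp add: inner_axis')
    hence "((\<lambda>h. (F (x + h *\<^sub>R axis i 1) s - F x s) / h) \<longlongrightarrow> DF x s $ i) (at 0)" by simp
    from filterlim_compose[OF this seq_at0]
    show "(\<lambda>n. (F (x + (1 / real (Suc n)) *\<^sub>R axis i 1) s - F x s) / (1 / real (Suc n))) \<longlonglongrightarrow> DF x s $ i" .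
  next
    fix n
    show "(\<lambda>s. (F (x + (1 / real (Suc n)) *\<^sub>R axis i 1) s - F x s) / (1 / real (Suc n))) \<in> borel_measurable P"
      using F_meas_x by measurable
  qed
  thus ?thesis
    by (subst borel_measurable_euclidean_space) (auto simp: Basis_vec_def cart_eq_inner_axis[symmetric])
qed

lemma DF_int: "integrable P (DF x)"
proof -
  interpret prob_space P by (rule P)
  show ?thesis
    by (rule integrable_const_bound[where B="real CARD('n) * \<eta>"]) (auto intro!: AE_I2 DF_bound DF_meas)
qed

end

context zo begin

lemma f_quad: "\<bar>f y - f x - inner (Gf x) (y - x)\<bar> \<le> L/2 * (norm (y - x))^2"
  unfolding f_def Gf_def by (rule int_quad[OF P F_int DF_int DF_quad])

lemma Gf_lip: "norm (Gf x - Gf y) \<le> L * norm (x - y)"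
  unfolding Gf_def by (rule int_lip[OF P DF_int]) (simp add: DF_def A1_lip)

lemma Gf_bound: "norm (Gf x) \<le> real CARD('n) * \<eta>"
  unfolding Gf_def by (rule int_bound[OF P DF_bound])

lemma f_deriv: "(f has_derivative (\<lambda>h. inner h (Gf x))) (at x)"
  by (rule deriv_from_quad[OF f_quad])

lemma grad_f: "grad f x = Gf x"
  by (rule grad_eqI[OF f_deriv])

lemma f_cont: "continuous_on UNIV f"
  by (rule continuous_at_imp_continuous_on) (auto intro: has_derivative_continuous[OF f_deriv])

lemma Gf_cont: "continuous_on UNIV Gf"
proof (rule lipschitz_on_continuous_on)
  show "L-lipschitz_on UNIV Gf"
    unfolding lipschitz_on_def using L_pos Gf_lip by (auto simp: dist_norm)
qed

lemma f_meas[measurable]: "f \<in> borel_measurable borel"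
  by (rule borel_measurable_continuous_onI[OF f_cont])

lemma Gf_meas[measurable]: "Gf \<in> borel_measurable borel"
  by (rule borel_measurable_continuous_onI[OF Gf_cont])

definition "Gm \<mu> x = (\<integral>v. Gf (x + \<mu> *\<^sub>R v) \<partial>unif_ball)"

lemma fv_int: "integrable unif_ball (\<lambda>v. f (x + \<mu> *\<^sub>R v))"
proof -
  interpret prob_space unif_ball by (rule unif_ball_prob)
  have "AE v in unif_ball. norm (f (x + \<mu> *\<^sub>R v)) \<le> \<bar>f x\<bar> + norm (Gf x) * \<bar>\<mu>\<bar> + L/2 * \<mu>^2"
    using AE_unif_ball
  proof eventually_elim
    case (elim v)
    have q: "\<bar>f (x + \<mu> *\<^sub>R v) - f x - inner (Gf x) (\<mu> *\<^sub>R v)\<bar> \<le> L/2 * (norm (\<mu> *\<^sub>R v))^2"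
      using f_quad[of "x + \<mu> *\<^sub>R v" x] by simp
    have i: "\<bar>inner (Gf x) (\<mu> *\<^sub>R v)\<bar> \<le> norm (Gf x) * \<bar>\<mu>\<bar>"
    proof -
      have "\<bar>inner (Gf x) (\<mu> *\<^sub>R v)\<bar> \<le> norm (Gf x) * norm (\<mu> *\<^sub>R v)" by (rule Cauchy_Schwarz_ineq2)
      also have "\<dots> \<le> norm (Gf x) * \<bar>\<mu>\<bar>" using elim by (intro mult_left_mono) (auto intro: mult_left_le)
      finally show ?thesis .
    qed
    have n: "(norm (\<mu> *\<^sub>R v))^2 \<le> \<mu>^2"
    proof -
      have "norm (\<mu> *\<^sub>R v) \<le> \<bar>\<mu>\<bar>" using elim by (auto intro: mult_left_le)
      hence "(norm (\<mu> *\<^sub>R v))^2 \<le> \<bar>\<mu>\<bar>^2" by (intro power_mono) auto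
      thus ?thesis by simp
    qed
    have nn: "L/2 * (norm (\<mu> *\<^sub>R v))^2 \<le> L/2 * \<mu>^2" using n L_pos by (intro mult_left_mono) auto
    show ?case using q i nn by (simp only: real_norm_def)
  qed
  thus ?thesis by (intro integrable_const_bound) auto
qed

lemma Gfv_int: "integrable unif_ball (\<lambda>v. Gf (x + \<mu> *\<^sub>R v))"
proof -
  interpret prob_space unif_ball by (rule unif_ball_prob)
  show ?thesis
    by (rule integrable_const_bound[where B="real CARD('n) * \<eta>"]) (auto intro!: AE_I2 Gf_bound)
qed

lemma fm_quad: "\<bar>smooth f \<mu> y - smooth f \<mu> x - inner (Gm \<mu> x) (y - x)\<bar> \<le> L/2 * (norm (y - x))^2"
  unfolding smooth_def Gm_def
proof (rule int_quad[OF unif_ball_prob fv_int Gfv_int])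
  fix x y v
  show "\<bar>f (y + \<mu> *\<^sub>R v) - f (x + \<mu> *\<^sub>R v) - inner (Gf (x + \<mu> *\<^sub>R v)) (y - x)\<bar> \<le> L/2 * (norm (y - x))^2"
    using f_quad[of "y + \<mu> *\<^sub>R v" "x + \<mu> *\<^sub>R v"] by simp
qed

lemma Gm_lip: "norm (Gm \<mu> x - Gm \<mu> y) \<le> L * norm (x - y)"
  unfolding Gm_def
  by (rule int_lip[OF unif_ball_prob Gfv_int]) (use Gf_lip in \<open>metis add_diff_cancel_right\<close>)

lemma Gm_bound: "norm (Gm \<mu> x) \<le> real CARD('n) * \<eta>"
  unfolding Gm_def by (rule int_bound[OF unif_ball_prob Gf_bound])

lemma grad_fm: "grad (smooth f \<mu>) x = Gm \<mu> x"
  by (rule grad_eqI[OF deriv_from_quad[OF fm_quad]])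

lemma fm_desc: "smooth f \<mu> y \<le> smooth f \<mu> x + inner (Gm \<mu> x) (y - x) + L/2 * (norm (y - x))^2"
proof -
  have "smooth f \<mu> y - smooth f \<mu> x - inner (Gm \<mu> x) (y - x) \<le> L/2 * (norm (y - x))^2"
    using fm_quad[of \<mu> y x] abs_ge_self order_trans by blast
  thus ?thesis by simp
qed

lemma Gm_cont: "continuous_on UNIV (Gm \<mu>)"
proof (rule lipschitz_on_continuous_on)
  show "L-lipschitz_on UNIV (Gm \<mu>)"
    unfolding lipschitz_on_def using L_pos Gm_lip by (auto simp: dist_norm)
qed

lemma Gm_meas[measurable]: "Gm \<mu> \<in> borel_measurable borel"
  by (rule borel_measurable_continuous_onI[OF Gm_cont])

lemma Gf_Gm: "norm (Gf x - Gm \<mu> x) \<le> L * \<bar>\<mu>\<bar> * (\<integral>v. norm v \<partial>(unif_ball :: (real^'n) measure))"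
proof -
  interpret prob_space "unif_ball :: (real^'n) measure" by (rule unif_ball_prob)
  have nint: "integrable (unif_ball :: (real^'n) measure) (\<lambda>v. norm v)"
    by (rule integrable_const_bound[where B=1]) (use AE_unif_ball in \<open>auto elim: AE_mp\<close>)
  have "Gf x - Gm \<mu> x = (\<integral>v. Gf x - Gf (x + \<mu> *\<^sub>R v) \<partial>unif_ball)"
  proof -
    have "prob UNIV = 1" using prob_space by simp
    thus ?thesis unfolding Gm_def using Gfv_int by (simp add: integral_diff)
  qed
  hence "norm (Gf x - Gm \<mu> x) \<le> (\<integral>v. norm (Gf x - Gf (x + \<mu> *\<^sub>R v)) \<partial>unif_ball)"
    by (simp add: integral_norm_bound)
  also have "\<dots> \<le> (\<integral>v. L * \<bar>\<mu>\<bar> * norm v \<partial>(unif_ball :: (real^'n) measure))"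
  proof (rule integral_mono)
    show "integrable unif_ball (\<lambda>v. norm (Gf x - Gf (x + \<mu> *\<^sub>R v)))"
      using Gfv_int by (intro integrable_norm integrable_diff) auto
    show "integrable (unif_ball :: (real^'n) measure) (\<lambda>v. L * \<bar>\<mu>\<bar> * norm v)" using nint by simp
    fix v
    show "norm (Gf x - Gf (x + \<mu> *\<^sub>R v)) \<le> L * \<bar>\<mu>\<bar> * norm v"
      using Gf_lip[of x "x + \<mu> *\<^sub>R v"] by (simp add: mult.assoc)
  qed
  also have "\<dots> = L * \<bar>\<mu>\<bar> * (\<integral>v. norm v \<partial>(unif_ball :: (real^'n) measure))" by simp
  finally show ?thesis .
qed

end

lemma count_floor:
  fixes r :: real and n :: nat
  assumes r: "0 \<le> r" "r < 1" and n: "0 < n"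
  shows "r \<le> (1 / real n) * (\<Sum>j<n. if real j / real n \<le> r then 1 else 0)"
proof -
  define m where "m = nat \<lfloor>real n * r\<rfloor>"
  have fl0: "0 \<le> \<lfloor>real n * r\<rfloor>" using r by simp
  have nr: "real n * r < real n" using r n by simp
  have mn: "m < n"
  proof -
    have "\<lfloor>real n * r\<rfloor> < int n" using nr by (simp add: floor_less_iff)
    thus ?thesis unfolding m_def using fl0 by linarith
  qed
  have iff: "real j / real n \<le> r \<longleftrightarrow> j \<le> m" for j
  proof -
    have "real j / real n \<le> r \<longleftrightarrow> real j \<le> real n * r" using n by (simp add: divide_le_eq mult.commute)
    also have "\<dots> \<longleftrightarrow> int j \<le> \<lfloor>real n * r\<rfloor>" by (simp add: le_floor_iff)
    also have "\<dots> \<longleftrightarrow> j \<le> m" unfolding m_def using fl0 by linarith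
    finally show ?thesis .
  qed
  have "(\<Sum>j<n. if real j / real n \<le> r then 1 else (0::real)) = (\<Sum>j<n. if j \<le> m then 1 else 0)"
    using iff by simp
  also have "\<dots> = (\<Sum>j\<in>{j\<in>{..<n}. j \<le> m}. 1)"
    by (subst sum.inter_filter) auto
  also have "{j\<in>{..<n}. j \<le> m} = {..m}" using mn by auto
  also have "(\<Sum>j\<in>{..m}. (1::real)) = real m + 1" by simp
  finally have s: "(\<Sum>j<n. if real j / real n \<le> r then 1 else (0::real)) = real m + 1" .
  have "real n * r < real m + 1"
  proof -
    have "real n * r < real_of_int \<lfloor>real n * r\<rfloor> + 1" by linarith
    thus ?thesis unfolding m_def using fl0 by simp
  qed
  hence "r \<le> (real m + 1) / real n" using n by (simp add: field_simps)
  thus ?thesis using s by simp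
qed

lemma measure_ball_scale: "0 \<le> r \<Longrightarrow> measure lborel (ball (0::real^'n) r) = r ^ CARD('n) * measure lborel (ball (0::real^'n) 1)"
  using content_ball_conv_unit_ball[of r "0::real^'n"] by simp

lemma measure_outer:
  assumes r: "0 \<le> r" "r \<le> 1"
  shows "measure (unif_ball :: (real^'n) measure) {v. r \<le> norm v} = 1 - r ^ CARD('n)"
proof -
  define V where "V = measure lborel (ball (0::real^'n) 1)"
  have Vpos: "0 < V" unfolding V_def by (rule content_ball_pos) simp
  have fin: "emeasure lborel (ball (0::real^'n) 1) < \<infinity>" by (rule emeasure_lborel_ball_finite)
  have ne0: "emeasure lborel (ball (0::real^'n) 1) \<noteq> 0"
    using fin Vpos unfolding V_def by (simp add: emeasure_eq_ennreal_measure)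
  have S: "{v::real^'n. r \<le> norm v} \<in> sets lborel" by measurable
  have "measure (unif_ball :: (real^'n) measure) {v. r \<le> norm v}
      = measure lborel (ball 0 1 \<inter> {v::real^'n. r \<le> norm v}) / V"
    unfolding unif_ball_def V_def using fin ne0 S by (intro measure_uniform_measure) auto
  also have "ball 0 1 \<inter> {v::real^'n. r \<le> norm v} = ball 0 1 - ball 0 r" by auto
  also have "measure lborel (ball (0::real^'n) 1 - ball 0 r) = V - r ^ CARD('n) * V"
    unfolding V_def measure_ball_scale[OF r(1), symmetric]
    using fin r by (intro measure_Diff) auto
  also have "(V - r ^ CARD('n) * V) / V = 1 - r ^ CARD('n)" using Vpos by (simp add: field_simps)
  finally show ?thesis .
qed

lemma E_le1: "(\<integral>v. norm v \<partial>(unif_ball :: (real^'n) measure)) \<le> 1"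
proof -
  interpret prob_space "unif_ball :: (real^'n) measure" by (rule unif_ball_prob)
  have "(\<integral>v. norm v \<partial>(unif_ball :: (real^'n) measure)) \<le> (\<integral>v. 1 \<partial>(unif_ball :: (real^'n) measure))"
    by (rule integral_mono_AE) (use AE_unif_ball in \<open>auto elim: AE_mp intro!: integrable_const_bound[where B=1]\<close>)
  thus ?thesis by (simp add: prob_space[unfolded space_unif_ball])
qed

lemma E_d1:
  assumes "CARD('n) = 1"
  shows "(\<integral>v. norm v \<partial>(unif_ball :: (real^'n) measure)) \<le> 11/20"
proof -
  interpret prob_space "unif_ball :: (real^'n) measure" by (rule unif_ball_prob)
  define n :: nat where "n = 10"
  define g where "g v = (1 / real n) * (\<Sum>j<n. indicator {v::real^'n. real j / real n \<le> norm v} v)" for v :: "real^'n"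
  have Sj: "{v::real^'n. a \<le> norm v} \<in> sets (unif_ball :: (real^'n) measure)" for a by simp
  have gint: "integrable (unif_ball :: (real^'n) measure) g"
    unfolding g_def by (intro integrable_mult_right integrable_sum integrable_real_indicator Sj) 
      (auto simp: emeasure_eq_measure)
  have "(\<integral>v. norm v \<partial>(unif_ball :: (real^'n) measure)) \<le> (\<integral>v. g v \<partial>(unif_ball :: (real^'n) measure))"
  proof (rule integral_mono_AE)
    show "integrable (unif_ball :: (real^'n) measure) (\<lambda>v. norm v)"
      by (rule integrable_const_bound[where B=1]) (use AE_unif_ball in \<open>auto elim: AE_mp\<close>)
    show "integrable (unif_ball :: (real^'n) measure) g" by (rule gint)
    show "AE v in (unif_ball :: (real^'n) measure). norm v \<le> g v"
      using AE_unif_ball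
    proof eventually_elim
      case (elim v)
      have "norm v \<le> (1 / real n) * (\<Sum>j<n. if real j / real n \<le> norm v then 1 else 0)"
        by (rule count_floor) (use elim in \<open>auto simp: n_def\<close>)
      thus ?case by (simp only: g_def indicator_def of_bool_def mem_Collect_eq)
    qed
  qed
  also have "(\<integral>v. g v \<partial>(unif_ball :: (real^'n) measure)) = (1 / real n) * (\<Sum>j<n. 1 - real j / real n)"
  proof -
    have "(\<integral>v. g v \<partial>(unif_ball :: (real^'n) measure))
        = (1 / real n) * (\<Sum>j<n. measure (unif_ball :: (real^'n) measure) {v. real j / real n \<le> norm v})"
    proof -
      have ii: "integrable (unif_ball :: (real^'n) measure) (\<lambda>x. indicator {v::real^'n. a \<le> norm v} x :: real)" for a
        by (intro integrable_real_indicator Sj) (auto simp: emeasure_eq_measure)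
      have "(\<integral>v. (\<Sum>j<n. (indicator {v::real^'n. real j / real n \<le> norm v} v :: real)) \<partial>(unif_ball :: (real^'n) measure))
          = (\<Sum>j<n. (\<integral>v. (indicator {v::real^'n. real j / real n \<le> norm v} v :: real) \<partial>(unif_ball :: (real^'n) measure)))"
        using ii by (subst Bochner_Integration.integral_sum) auto
      thus ?thesis unfolding g_def by (simp add: integral_mult_right_zero)
    qed
    also have "\<dots> = (1 / real n) * (\<Sum>j<n. 1 - real j / real n)"
    proof (intro arg_cong2[where f="(*)"] refl sum.cong)
      fix j assume "j \<in> {..<n}"
      hence j: "0 \<le> real j / real n" "real j / real n \<le> 1" by (auto simp: n_def)
      show "measure (unif_ball :: (real^'n) measure) {v. real j / real n \<le> norm v} = 1 - real j / real n"
        using measure_outer[OF j, where 'n='n] assms by simp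
    qed
    finally show ?thesis .
  qed
  also have "\<dots> = 11/20" by (simp add: n_def eval_nat_numeral)
  finally show ?thesis .
qed

lemma E_bound: "3 * (\<integral>v. norm v \<partial>(unif_ball :: (real^'n) measure))^2 \<le> (real CARD('n))^2"
proof -
  define E where "E = (\<integral>v. norm v \<partial>(unif_ball :: (real^'n) measure))"
  have E0: "0 \<le> E" unfolding E_def by (rule integral_nonneg_AE) auto
  show ?thesis
  proof (cases "CARD('n) = 1")
    case True
    have "E \<le> 11/20" unfolding E_def by (rule E_d1[OF True])
    hence "E^2 \<le> (11/20)^2" using E0 by (intro power_mono) auto
    thus ?thesis using True unfolding E_def[symmetric] by (simp add: power2_eq_square)
  next
    case False
    hence "2 \<le> CARD('n)" using zero_less_card_finite[where 'a='n] by linarith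
    hence "(2::real)^2 \<le> (real CARD('n))^2" by (intro power_mono) auto
    moreover have "E^2 \<le> 1" using E_le1[where 'n='n] E0 unfolding E_def[symmetric] by (simp add: power_le_one)
    ultimately show ?thesis unfolding E_def[symmetric] by simp
  qed
qed

lemma hnorm_sq: "\<forall>i. 0 \<le> h$i \<Longrightarrow> (hnorm h v)^2 = (\<Sum>i\<in>UNIV. h$i * (v$i)^2)"
  unfolding hnorm_def sq_norm_vec by (simp add: power_mult_distrib)

lemma wproj_vi:
  fixes h x g :: "real^'n"
  assumes hpos: "\<forall>i. 0 < h$i" and al: "0 < \<alpha>" and X: "closed X" "convex X" "X \<noteq> {}"
  defines "y \<equiv> wproj X h (x - \<alpha> *\<^sub>R (\<chi> i. g$i / h$i))"
  shows "vi X h x \<alpha> g ((1/\<alpha>) *\<^sub>R (x - y))"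
proof -
  define b where "b = x - \<alpha> *\<^sub>R (\<chi> i. g$i / h$i)"
  have eqf: "(\<lambda>z. (hnorm h (z - b))^2) = qobj 0 1 h b"
    using hpos by (auto simp: fun_eq_iff qobj_def hnorm_sq less_imp_le)
  have y: "y = arg_min_on (qobj 0 1 h b) X" unfolding y_def wproj_def b_def[symmetric] eqf ..
  have yX: "y \<in> X" and v: "\<And>z. z \<in> X \<Longrightarrow> 0 \<le> (\<Sum>i\<in>UNIV. (0$i + 2*1*h$i*(y$i - b$i)) * (z$i - y$i))"
    unfolding y by (rule qobj_VI[OF hpos _ X]; simp)+
  have xy: "x - \<alpha> *\<^sub>R ((1/\<alpha>) *\<^sub>R (x - y)) = y" using al by simp
  show ?thesis unfolding vi_def xy
  proof (intro conjI ballI)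
    show "y \<in> X" by (rule yX)
    fix z assume z: "z \<in> X"
    have "(\<Sum>i\<in>UNIV. (g$i - h$i * ((1/\<alpha>) *\<^sub>R (x - y))$i) * (z$i - y$i))
        = (1/(2*\<alpha>)) * (\<Sum>i\<in>UNIV. (0$i + 2*1*h$i*(y$i - b$i)) * (z$i - y$i))"
      unfolding sum_distrib_left
    proof (rule sum.cong[OF refl])
      fix i
      have hi: "0 < h$i" using hpos by auto
      show "(g$i - h$i * ((1/\<alpha>) *\<^sub>R (x - y))$i) * (z$i - y$i) = (1/(2*\<alpha>)) * ((0$i + 2*1*h$i*(y$i - b$i)) * (z$i - y$i))"
        unfolding b_def using hi al by (simp add: field_simps)
    qed
    also have "\<dots> \<ge> 0" using v[OF z] al by simp
    finally show "0 \<le> (\<Sum>i\<in>UNIV. (g$i - h$i * ((1/\<alpha>) *\<^sub>R (x - y))$i) * (z$i - y$i))" .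
  qed
qed

lemma gmap_vi:
  fixes h x g :: "real^'n"
  assumes hpos: "\<forall>i. 0 < h$i" and al: "0 < \<alpha>" and X: "closed X" "convex X" "X \<noteq> {}"
  shows "vi X h x \<alpha> g (gmap X h x g \<alpha>)"
proof -
  define y where "y = gmap_plus X h x g \<alpha>"
  have eqf: "(\<lambda>z. inner g z + 1 / (2 * \<alpha>) * (hnorm h (z - x))^2) = qobj g (1/(2*\<alpha>)) h x"
    using hpos by (auto simp: fun_eq_iff qobj_def hnorm_sq less_imp_le)
  have y: "y = arg_min_on (qobj g (1/(2*\<alpha>)) h x) X" unfolding y_def gmap_plus_def eqf ..
  have K: "0 < 1/(2*\<alpha>)" using al by simp
  have yX: "y \<in> X" and v: "\<And>z. z \<in> X \<Longrightarrow> 0 \<le> (\<Sum>i\<in>UNIV. (g$i + 2*(1/(2*\<alpha>))*h$i*(y$i - x$i)) * (z$i - y$i))"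
    unfolding y by (rule qobj_VI[OF hpos K X])+
  have gm: "gmap X h x g \<alpha> = (1/\<alpha>) *\<^sub>R (x - y)" unfolding gmap_def y_def ..
  have xy: "x - \<alpha> *\<^sub>R ((1/\<alpha>) *\<^sub>R (x - y)) = y" using al by simp
  show ?thesis unfolding vi_def gm xy
  proof (intro conjI ballI)
    show "y \<in> X" by (rule yX)
    fix z assume z: "z \<in> X"
    have "(\<Sum>i\<in>UNIV. (g$i - h$i * ((1/\<alpha>) *\<^sub>R (x - y))$i) * (z$i - y$i))
        = (\<Sum>i\<in>UNIV. (g$i + 2*(1/(2*\<alpha>))*h$i*(y$i - x$i)) * (z$i - y$i))"
      using al by (intro sum.cong refl) (simp add: field_simps)
    also have "\<dots> \<ge> 0" using v[OF z] .
    finally show "0 \<le> (\<Sum>i\<in>UNIV. (g$i - h$i * ((1/\<alpha>) *\<^sub>R (x - y))$i) * (z$i - y$i))" .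
  qed
qed

lemma wproj_in:
  fixes h b :: "real^'n"
  assumes hpos: "\<forall>i. 0 < h$i" and X: "closed X" "convex X" "X \<noteq> {}"
  shows "wproj X h b \<in> X"
proof -
  have eqf: "(\<lambda>z. (hnorm h (z - b))^2) = qobj 0 1 h b"
    using hpos by (auto simp: fun_eq_iff qobj_def hnorm_sq less_imp_le)
  show ?thesis unfolding wproj_def eqf by (rule qobj_VI(1)[OF hpos _ X]) simp
qed

lemma wproj_VI_raw:
  fixes h b :: "real^'n"
  assumes hpos: "\<forall>i. 0 < h$i" and X: "closed X" "convex X" "X \<noteq> {}"
  shows "\<And>z. z \<in> X \<Longrightarrow> 0 \<le> (\<Sum>i\<in>UNIV. h$i * (wproj X h b $ i - b$i) * (z$i - wproj X h b $ i))"
proof -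
  fix z assume z: "z \<in> X"
  have eqf: "(\<lambda>z. (hnorm h (z - b))^2) = qobj 0 1 h b"
    using hpos by (auto simp: fun_eq_iff qobj_def hnorm_sq less_imp_le)
  have "0 \<le> (\<Sum>i\<in>UNIV. (0$i + 2*1*h$i*(wproj X h b $ i - b$i)) * (z$i - wproj X h b $ i))"
    unfolding wproj_def eqf by (rule qobj_VI(2)[OF hpos _ X z]) simp
  also have "\<dots> = 2 * (\<Sum>i\<in>UNIV. h$i * (wproj X h b $ i - b$i) * (z$i - wproj X h b $ i))"
    by (simp add: sum_distrib_left mult.assoc)
  finally show "0 \<le> (\<Sum>i\<in>UNIV. h$i * (wproj X h b $ i - b$i) * (z$i - wproj X h b $ i))" by simp
qed

lemma comp_le_norm: "\<bar>(v::real^'n)$i\<bar> \<le> norm v"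
  by (rule component_le_norm_cart)

lemma wproj_lip:
  fixes h1 h2 b1 b2 :: "real^'n"
  assumes h1: "\<forall>i. c \<le> h1$i" and h2: "\<forall>i. c \<le> h2$i" and c: "0 < c"
    and X: "closed X" "convex X" "X \<noteq> {}"
  shows "norm (wproj X h1 b1 - wproj X h2 b2)
     \<le> real CARD('n) / c * (norm (h2 - h1) * norm (wproj X h2 b2 - b2) + norm h1 * norm (b1 - b2))"
proof -
  define y1 where "y1 = wproj X h1 b1"
  define y2 where "y2 = wproj X h2 b2"
  define \<delta> where "\<delta> = y1 - y2"
  define A where "A = norm (h2 - h1) * norm (y2 - b2) + norm h1 * norm (b1 - b2)"
  have h1p: "\<forall>i. 0 < h1$i" using h1 c by (auto intro: less_le_trans)
  have h2p: "\<forall>i. 0 < h2$i" using h2 c by (auto intro: less_le_trans)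
  have y1X: "y1 \<in> X" unfolding y1_def by (rule wproj_in[OF h1p X])
  have y2X: "y2 \<in> X" unfolding y2_def by (rule wproj_in[OF h2p X])
  have v1: "0 \<le> (\<Sum>i\<in>UNIV. h1$i * (y1$i - b1$i) * (y2$i - y1$i))"
    using wproj_VI_raw[OF h1p X y2X, of b1] unfolding y1_def .
  have v2: "0 \<le> (\<Sum>i\<in>UNIV. h2$i * (y2$i - b2$i) * (y1$i - y2$i))"
    using wproj_VI_raw[OF h2p X y1X, of b2] unfolding y2_def .
  have key: "(\<Sum>i\<in>UNIV. h1$i * (\<delta>$i)^2) \<le> (\<Sum>i\<in>UNIV. ((h2$i - h1$i) * (y2$i - b2$i) + h1$i * (b1$i - b2$i)) * \<delta>$i)"
  proof -
    have "(\<Sum>i\<in>UNIV. ((h2$i - h1$i) * (y2$i - b2$i) + h1$i * (b1$i - b2$i)) * \<delta>$i) - (\<Sum>i\<in>UNIV. h1$i * (\<delta>$i)^2)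
        = (\<Sum>i\<in>UNIV. h1$i * (y1$i - b1$i) * (y2$i - y1$i)) + (\<Sum>i\<in>UNIV. h2$i * (y2$i - b2$i) * (y1$i - y2$i))"
      unfolding \<delta>_def by (simp add: sum_subtractf[symmetric] sum.distrib[symmetric] power2_eq_square algebra_simps)
    thus ?thesis using v1 v2 by linarith
  qed
  have lhs: "c * (norm \<delta>)^2 \<le> (\<Sum>i\<in>UNIV. h1$i * (\<delta>$i)^2)"
    unfolding sq_norm_vec sum_distrib_left using h1 by (intro sum_mono mult_right_mono) auto
  have rhs: "(\<Sum>i\<in>UNIV. ((h2$i - h1$i) * (y2$i - b2$i) + h1$i * (b1$i - b2$i)) * \<delta>$i) \<le> real CARD('n) * A * norm \<delta>"
  proof -
    have "(\<Sum>i\<in>UNIV. ((h2$i - h1$i) * (y2$i - b2$i) + h1$i * (b1$i - b2$i)) * \<delta>$i) \<le> (\<Sum>i\<in>(UNIV::'n set). A * norm \<delta>)"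
    proof (rule sum_mono)
      fix i
      have a: "\<bar>(h2$i - h1$i) * (y2$i - b2$i) + h1$i * (b1$i - b2$i)\<bar> \<le> A"
      proof -
        have "\<bar>(h2$i - h1$i) * (y2$i - b2$i) + h1$i * (b1$i - b2$i)\<bar> \<le> \<bar>(h2 - h1)$i\<bar> * \<bar>(y2 - b2)$i\<bar> + \<bar>h1$i\<bar> * \<bar>(b1 - b2)$i\<bar>"
          by (simp add: abs_mult[symmetric] abs_triangle_ineq[THEN order_trans])
        also have "\<dots> \<le> A" unfolding A_def
          by (intro add_mono mult_mono comp_le_norm) auto
        finally show ?thesis .
      qed
      have "((h2$i - h1$i) * (y2$i - b2$i) + h1$i * (b1$i - b2$i)) * \<delta>$i \<le> \<bar>(h2$i - h1$i) * (y2$i - b2$i) + h1$i * (b1$i - b2$i)\<bar> * \<bar>\<delta>$i\<bar>"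
        by (simp add: abs_mult[symmetric])
      also have "\<dots> \<le> A * norm \<delta>" by (intro mult_mono a comp_le_norm) (auto simp: A_def)
      finally show "((h2$i - h1$i) * (y2$i - b2$i) + h1$i * (b1$i - b2$i)) * \<delta>$i \<le> A * norm \<delta>" .
    qed
    thus ?thesis by simp
  qed
  have "c * (norm \<delta>)^2 \<le> real CARD('n) * A * norm \<delta>" using lhs key rhs by linarith
  hence "c * norm \<delta> \<le> real CARD('n) * A" if "0 < norm \<delta>" using that by (simp add: power2_eq_square)
  hence "norm \<delta> \<le> real CARD('n) * A / c" using c
    by (cases "norm \<delta> = 0") (auto simp: field_simps A_def)
  thus ?thesis unfolding \<delta>_def y1_def y2_def A_def by (simp add: mult.commute)
qed

definition "clampv c (h::real^'n) = (\<chi> i. max (h$i) c)"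
definition "Wc c X h b = wproj X (clampv c h) b"

lemma clampv_ge: "\<forall>i. c \<le> clampv c h $ i" by (simp add: clampv_def)

lemma clampv_id: "\<forall>i. c \<le> h$i \<Longrightarrow> clampv c h = h" by (simp add: clampv_def vec_eq_iff)

lemma clampv_cont: "continuous_on UNIV (clampv c)"
  unfolding clampv_def by (intro continuous_intros)

lemma Wc_cont:
  assumes c: "0 < c" and X: "closed X" "convex X" "X \<noteq> {}"
  shows "continuous_on UNIV (\<lambda>p::((real^'n) \<times> (real^'n)). Wc c X (fst p) (snd p))"
proof (rule continuous_at_imp_continuous_on, intro ballI)
  fix p0 :: "(real^'n) \<times> (real^'n)"
  obtain h0 b0 where p0: "p0 = (h0, b0)" by fastforce
  define K0 where "K0 = norm (wproj X (clampv c h0) b0 - b0)"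
  define g where "g p = real CARD('n) / c * (norm (clampv c h0 - clampv c (fst p)) * K0 + norm (clampv c (fst p)) * norm (snd p - b0))" for p :: "(real^'n) \<times> (real^'n)"
  have cc: "isCont (clampv c) h0" using clampv_cont continuous_on_eq_continuous_at by blast
  have ct: "((\<lambda>x. clampv c (fst x)) \<longlongrightarrow> clampv c (fst (h0, b0))) (at (h0, b0))"
  proof -
    have "(fst \<longlongrightarrow> h0) (at (h0, b0))" using tendsto_fst[OF tendsto_ident_at[of "(h0, b0)" UNIV]] by simp
    from isCont_tendsto_compose[OF cc this] show ?thesis by simp
  qed
  have "(g \<longlongrightarrow> g p0) (at p0)"
    unfolding g_def p0
    by (intro tendsto_intros ct tendsto_fst tendsto_snd tendsto_ident_at)
  moreover have "g p0 = 0" by (simp add: g_def p0)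
  ultimately have g0: "(g \<longlongrightarrow> 0) (at p0)" by simp
  have bnd: "norm (Wc c X (fst p) (snd p) - Wc c X (fst p0) (snd p0)) \<le> g p" for p
  proof -
    have "norm (wproj X (clampv c (fst p)) (snd p) - wproj X (clampv c h0) b0)
       \<le> real CARD('n) / c * (norm (clampv c h0 - clampv c (fst p)) * norm (wproj X (clampv c h0) b0 - b0) + norm (clampv c (fst p)) * norm (snd p - b0))"
      by (rule wproj_lip[OF clampv_ge clampv_ge c X])
    thus ?thesis unfolding Wc_def g_def p0 K0_def by simp
  qed
  have "((\<lambda>p. Wc c X (fst p) (snd p) - Wc c X (fst p0) (snd p0)) \<longlongrightarrow> 0) (at p0)"
    by (rule Lim_null_comparison[OF _ g0]) (use bnd in auto)
  hence "((\<lambda>p. Wc c X (fst p) (snd p)) \<longlongrightarrow> Wc c X (fst p0) (snd p0)) (at p0)"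
    by (simp add: LIM_zero_iff)
  thus "isCont (\<lambda>p. Wc c X (fst p) (snd p)) p0" by (simp add: isCont_def)
qed

lemma integrable_bounded_meas:
  fixes f :: "'a \<Rightarrow> real"
  assumes "prob_space M" "f \<in> borel_measurable M" "\<And>x. x \<in> space M \<Longrightarrow> \<bar>f x\<bar> \<le> K"
  shows "integrable M f"
proof -
  interpret prob_space M by fact
  show ?thesis by (rule integrable_const_bound[where B=K]) (use assms in auto)
qed

lemma indep_lemma:
  fixes G :: "'a \<times> ('b \<times> 'c) \<Rightarrow> real" and \<psi> :: "'c \<Rightarrow> real"
  assumes A: "prob_space A" and B: "prob_space B" and U: "prob_space U"
    and Gm: "G \<in> borel_measurable (A \<Otimes>\<^sub>M (B \<Otimes>\<^sub>M U))"
    and Gb: "\<And>w. w \<in> space (A \<Otimes>\<^sub>M (B \<Otimes>\<^sub>M U)) \<Longrightarrow> \<bar>G w\<bar> \<le> K"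
    and Gr: "\<And>x y r r'. G (x, (y, r)) = G (x, (y, r'))"
    and \<psi>m: "\<psi> \<in> borel_measurable U" and \<psi>b: "\<And>r. r \<in> space U \<Longrightarrow> \<bar>\<psi> r\<bar> \<le> K'"
  shows "(\<integral>w. G w * \<psi> (snd (snd w)) \<partial>(A \<Otimes>\<^sub>M (B \<Otimes>\<^sub>M U))) = (\<integral>w. G w \<partial>(A \<Otimes>\<^sub>M (B \<Otimes>\<^sub>M U))) * (\<integral>r. \<psi> r \<partial>U)"
proof -
  interpret A: prob_space A by (rule A)
  interpret B: prob_space B by (rule B)
  interpret U: prob_space U by (rule U)
  have BU: "prob_space (B \<Otimes>\<^sub>M U)" by (rule prob_space_pair[OF B U])
  interpret BU: pair_prob_space B U by unfold_locales
  interpret ABU: pair_prob_space A "B \<Otimes>\<^sub>M U" using BU by (simp add: pair_prob_space_def pair_sigma_finite_def A.prob_space_axioms prob_space_imp_sigma_finite A.sigma_finite_measure_axioms)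
  obtain r0 where r0: "r0 \<in> space U" using U.not_empty by blast
  have K0: "0 \<le> K"
  proof -
    obtain a where "a \<in> space A" using A.not_empty by blast
    obtain b where "b \<in> space B" using B.not_empty by blast
    have "(a, (b, r0)) \<in> space (A \<Otimes>\<^sub>M (B \<Otimes>\<^sub>M U))" using \<open>a \<in> _\<close> \<open>b \<in> _\<close> r0 by (simp add: space_pair_measure)
    from Gb[OF this] show ?thesis by linarith
  qed
  define g where "g x y = G (x, (y, r0))" for x y
  have gm: "g x \<in> borel_measurable B" if x: "x \<in> space A" for x
  proof -
    have "(\<lambda>y. (x, (y, r0))) \<in> measurable B (A \<Otimes>\<^sub>M (B \<Otimes>\<^sub>M U))"
      using x r0 by measurable
    from measurable_compose[OF this Gm] show ?thesis unfolding g_def by (simp add: fun_eq_iff)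
  qed
  have gb: "\<bar>g x y\<bar> \<le> K" if "x \<in> space A" "y \<in> space B" for x y
    unfolding g_def using that r0 by (intro Gb) (simp add: space_pair_measure)
  have inner: "(\<integral>z. G (x, z) * \<phi> (snd z) \<partial>(B \<Otimes>\<^sub>M U)) = (\<integral>y. g x y \<partial>B) * (\<integral>r. \<phi> r \<partial>U)"
    if x: "x \<in> space A" and \<phi>m: "\<phi> \<in> borel_measurable U" and \<phi>b: "\<And>r. r \<in> space U \<Longrightarrow> \<bar>\<phi> r\<bar> \<le> Kq" for x \<phi> Kq
  proof -
    have eq: "(\<integral>z. G (x, z) * \<phi> (snd z) \<partial>(B \<Otimes>\<^sub>M U)) = (\<integral>z. g x (fst z) * \<phi> (snd z) \<partial>(B \<Otimes>\<^sub>M U))"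
      by (intro Bochner_Integration.integral_cong refl) (metis Gr g_def prod.collapse)
    have K2: "0 \<le> Kq" using \<phi>b[OF r0] by linarith
    have int: "integrable (B \<Otimes>\<^sub>M U) (\<lambda>z. g x (fst z) * \<phi> (snd z))"
    proof (rule integrable_bounded_meas[OF BU, where K="K * Kq"])
      show "(\<lambda>z. g x (fst z) * \<phi> (snd z)) \<in> borel_measurable (B \<Otimes>\<^sub>M U)"
        using gm[OF x] \<phi>m by measurable
      fix z assume "z \<in> space (B \<Otimes>\<^sub>M U)"
      hence "fst z \<in> space B" "snd z \<in> space U" by (auto simp: space_pair_measure)
      thus "\<bar>g x (fst z) * \<phi> (snd z)\<bar> \<le> K * Kq"
        using gb[OF x] \<phi>b K0 K2 by (simp add: abs_mult mult_mono')
    qed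
    have "(\<integral>z. g x (fst z) * \<phi> (snd z) \<partial>(B \<Otimes>\<^sub>M U)) = (\<integral>y. (\<integral>r. g x y * \<phi> r \<partial>U) \<partial>B)"
      using BU.integral_fst'[OF int] by simp
    also have "\<dots> = (\<integral>y. g x y * (\<integral>r. \<phi> r \<partial>U) \<partial>B)" by simp
    also have "\<dots> = (\<integral>y. g x y \<partial>B) * (\<integral>r. \<phi> r \<partial>U)" by simp
    finally show ?thesis using eq by simp
  qed
  have intG: "integrable (A \<Otimes>\<^sub>M (B \<Otimes>\<^sub>M U)) G"
    by (rule integrable_bounded_meas[OF prob_space_pair[OF A BU] Gm Gb])
  have K'0: "0 \<le> K'" using \<psi>b[OF r0] by linarith
  have intGp: "integrable (A \<Otimes>\<^sub>M (B \<Otimes>\<^sub>M U)) (\<lambda>w. G w * \<psi> (snd (snd w)))"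
  proof (rule integrable_bounded_meas[OF prob_space_pair[OF A BU], where K="K * K'"])
    show "(\<lambda>w. G w * \<psi> (snd (snd w))) \<in> borel_measurable (A \<Otimes>\<^sub>M (B \<Otimes>\<^sub>M U))"
      using Gm \<psi>m by measurable
    fix w assume w: "w \<in> space (A \<Otimes>\<^sub>M (B \<Otimes>\<^sub>M U))"
    hence "snd (snd w) \<in> space U" by (auto simp: space_pair_measure)
    thus "\<bar>G w * \<psi> (snd (snd w))\<bar> \<le> K * K'"
      using Gb[OF w] \<psi>b K0 K'0 by (simp add: abs_mult mult_mono')
  qed
  have "(\<integral>w. G w * \<psi> (snd (snd w)) \<partial>(A \<Otimes>\<^sub>M (B \<Otimes>\<^sub>M U))) = (\<integral>x. (\<integral>z. G (x, z) * \<psi> (snd z) \<partial>(B \<Otimes>\<^sub>M U)) \<partial>A)"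
    using ABU.integral_fst'[OF intGp] by simp
  also have "\<dots> = (\<integral>x. (\<integral>y. g x y \<partial>B) * (\<integral>r. \<psi> r \<partial>U) \<partial>A)"
    by (intro Bochner_Integration.integral_cong refl inner[of _ _ K'] \<psi>m \<psi>b) auto
  also have "\<dots> = (\<integral>x. (\<integral>y. g x y \<partial>B) \<partial>A) * (\<integral>r. \<psi> r \<partial>U)" by simp
  also have "(\<integral>x. (\<integral>y. g x y \<partial>B) \<partial>A) = (\<integral>x. (\<integral>z. G (x, z) * (\<lambda>_. 1) (snd z) \<partial>(B \<Otimes>\<^sub>M U)) \<partial>A)"
    by (intro Bochner_Integration.integral_cong refl) (subst inner[of _ _ 1], auto simp: U.prob_space)
  also have "\<dots> = (\<integral>w. G w \<partial>(A \<Otimes>\<^sub>M (B \<Otimes>\<^sub>M U)))"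
    using ABU.integral_fst'[OF intG] by simp
  finally show ?thesis .
qed

lemma bm_vec_nth[measurable (raw)]:
  fixes f :: "'a \<Rightarrow> real^'n"
  shows "f \<in> borel_measurable M \<Longrightarrow> (\<lambda>x. f x $ i) \<in> borel_measurable M"
proof -
  assume f: "f \<in> borel_measurable M"
  have "(\<lambda>v::real^'n. v $ i) \<in> borel_measurable borel"
    by (rule borel_measurable_continuous_onI) (intro continuous_intros)
  from measurable_compose[OF f this] show ?thesis .
qed

lemma bm_vec_lambda[measurable (raw)]:
  fixes g :: "'n::finite \<Rightarrow> 'a \<Rightarrow> real"
  shows "(\<And>i. (\<lambda>x. g i x) \<in> borel_measurable M) \<Longrightarrow> (\<lambda>x. \<chi> i. g i x) \<in> borel_measurable M"
proof -
  assume g: "\<And>i. (\<lambda>x. g i x) \<in> borel_measurable M"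
  show ?thesis
    by (subst borel_measurable_euclidean_space) (auto simp: Basis_vec_def inner_axis g)
qed

lemma sets_unif_sphere[simp, measurable_cong]: "sets (unif_sphere :: (real^'n) measure) = sets borel"
  by (simp add: unif_sphere_def)

lemma space_unif_sphere[simp]: "space (unif_sphere :: (real^'n) measure) = UNIV"
  by (simp add: unif_sphere_def)

lemma prob_unif_sphere: "prob_space (unif_sphere :: (real^'n) measure)"
  unfolding unif_sphere_def
  by (rule prob_space.prob_space_distr[OF unif_ball_prob]) measurable

lemma is_arg_min_affine:
  fixes \<Phi> \<Psi> :: "'a \<Rightarrow> real"
  assumes "0 < k" "\<And>z. \<Phi> z = k * \<Psi> z + C"
  shows "arg_min_on \<Phi> S = arg_min_on \<Psi> S"
proof -
  have "is_arg_min \<Phi> (\<lambda>x. x \<in> S) = is_arg_min \<Psi> (\<lambda>x. x \<in> S)"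
    unfolding is_arg_min_def fun_eq_iff using assms by auto
  thus ?thesis unfolding arg_min_on_def arg_min_def by simp
qed

lemma gmap_plus_eq:
  fixes h x g :: "real^'n"
  assumes hpos: "\<forall>i. 0 < h$i" and al: "0 < \<alpha>"
  shows "gmap_plus X h x g \<alpha> = wproj X h (x - \<alpha> *\<^sub>R (\<chi> i. g$i / h$i))"
  unfolding gmap_plus_def wproj_def
proof (rule is_arg_min_affine[where k="1/(2*\<alpha>)" and C="- (\<Sum>i\<in>UNIV. \<alpha> * (g$i)^2 / (2 * h$i)) + inner g x"])
  show "0 < 1 / (2 * \<alpha>)" using al by simp
  fix z
  have "inner g z + 1 / (2 * \<alpha>) * (hnorm h (z - x))^2
      = (\<Sum>i\<in>UNIV. g$i * z$i + 1 / (2 * \<alpha>) * (h$i * (z$i - x$i)^2))"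
    using hpos by (simp add: hnorm_sq less_imp_le inner_vec_def sum.distrib sum_distrib_left)
  also have "\<dots> = (\<Sum>i\<in>UNIV. 1 / (2 * \<alpha>) * (h$i * ((z - (x - \<alpha> *\<^sub>R (\<chi> i. g$i / h$i)))$i)^2) - \<alpha> * (g$i)^2 / (2 * h$i) + g$i * x$i)"
  proof (rule sum.cong[OF refl])
    fix i
    have hi: "0 < h$i" using hpos by auto
    show "g$i * z$i + 1 / (2 * \<alpha>) * (h$i * (z$i - x$i)^2)
        = 1 / (2 * \<alpha>) * (h$i * ((z - (x - \<alpha> *\<^sub>R (\<chi> i. g$i / h$i)))$i)^2) - \<alpha> * (g$i)^2 / (2 * h$i) + g$i * x$i"
      using hi al by (simp add: field_simps power2_eq_square)
  qed
  also have "\<dots> = 1 / (2 * \<alpha>) * (hnorm h (z - (x - \<alpha> *\<^sub>R (\<chi> i. g$i / h$i))))^2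
        + (- (\<Sum>i\<in>UNIV. \<alpha> * (g$i)^2 / (2 * h$i)) + inner g x)"
    using hpos by (simp add: hnorm_sq less_imp_le inner_vec_def sum.distrib sum_distrib_left sum_subtractf)
  finally show "inner g z + 1 / (2 * \<alpha>) * (hnorm h (z - x))^2
      = 1 / (2 * \<alpha>) * (hnorm h (z - (x - \<alpha> *\<^sub>R (\<chi> i. g$i / h$i))))^2
        + (- (\<Sum>i\<in>UNIV. \<alpha> * (g$i)^2 / (2 * h$i)) + inner g x)" .
qed

locale zo2 = zo F P L \<eta> for F :: "real^'n \<Rightarrow> 's \<Rightarrow> real" and P L \<eta> +
  fixes X :: "(real^'n) set" and x1 vh0 :: "real^'n" and c \<alpha> \<beta>2 Df :: real and T :: nat
  assumes X_closed: "closed X" and X_convex: "convex X" and x1_in: "x1 \<in> X"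
    and c_pos: "0 < c" and vh0: "\<And>i. c \<le> sqrt (vh0 $ i)"
    and alpha_pos: "0 < \<alpha>" and alpha_le: "\<alpha> \<le> c / L"
    and beta2: "0 < \<beta>2" "\<beta>2 \<le> 1" and T_pos: "1 \<le> T"
    and Df: "\<And>x. smooth f (1 / sqrt (real T * real CARD('n))) x1 - smooth f (1 / sqrt (real T * real CARD('n))) x \<le> Df"
begin

definition "mu = 1 / sqrt (real T * real CARD('n))"
definition "St xs us t = zo_adamm F X x1 vh0 (\<lambda>_. \<alpha>) (\<lambda>_. 0) \<beta>2 mu xs us t"
definition "xx xs us t = zo_x F X x1 vh0 (\<lambda>_. \<alpha>) (\<lambda>_. 0) \<beta>2 mu xs us t"
definition "vv xs us t = zo_vhat F X x1 vh0 (\<lambda>_. \<alpha>) (\<lambda>_. 0) \<beta>2 mu xs us t"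
definition "gg xs us t = zo_ghat F X x1 vh0 (\<lambda>_. \<alpha>) (\<lambda>_. 0) \<beta>2 mu xs us t"
definition "hh xs us t = (\<chi> i. sqrt (vv xs us t $ i))"

lemma Xne: "X \<noteq> {}" using x1_in by auto

lemma mu_pos: "0 < mu"
  unfolding mu_def using T_pos by simp

lemma xx_eq: "xx xs us t = fst (St xs us (t - 1))"
  by (simp add: xx_def zo_x_def St_def)

lemma vv_eq: "vv xs us t = snd (snd (snd (St xs us t)))"
  by (simp add: vv_def zo_vhat_def St_def)

lemma gg_eq: "gg xs us t = zo_grad (\<lambda>z. F z (xs t)) mu (xx xs us t) (us t)"
  by (simp add: gg_def zo_ghat_def xx_def)

lemma St_0: "St xs us 0 = (x1, 0, 0, vh0)" by (simp add: St_def)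

lemma St_Suc:
  fixes xs :: "nat \<Rightarrow> 's" and us :: "nat \<Rightarrow> real^'n" and t :: nat
  defines "x \<equiv> fst (St xs us t)" and "v \<equiv> fst (snd (snd (St xs us t)))" and "vh \<equiv> snd (snd (snd (St xs us t)))"
  defines "g \<equiv> zo_grad (\<lambda>z. F z (xs (Suc t))) mu x (us (Suc t))"
  defines "v' \<equiv> \<beta>2 *\<^sub>R v + (1 - \<beta>2) *\<^sub>R (\<chi> i. (g $ i)\<^sup>2)"
  defines "vh' \<equiv> (\<chi> i. max (vh $ i) (v' $ i))"
  shows "St xs us (Suc t) = (wproj X (\<chi> i. sqrt (vh' $ i)) (x - \<alpha> *\<^sub>R (\<chi> i. g $ i / sqrt (vh' $ i))), g, v', vh')"
proof -
  obtain x0 m0 v0 vh0' where e: "St xs us t = (x0, m0, v0, vh0')" by (metis prod_cases4)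
  show ?thesis using e unfolding x_def v_def vh_def g_def v'_def vh'_def
    by (simp add: St_def Let_def)
qed

lemma c2_le_vh0: "c^2 \<le> vh0 $ i"
proof -
  have "0 < sqrt (vh0 $ i)" using vh0[of i] c_pos by linarith
  hence p: "0 < vh0 $ i" by simp
  have "c^2 \<le> (sqrt (vh0 $ i))^2" using vh0[of i] c_pos by (intro power_mono) auto
  thus ?thesis using p by simp
qed

lemma vv_ge: "c^2 \<le> vv xs us t $ i"
proof (induction t)
  case 0 thus ?case by (simp add: vv_eq St_0 c2_le_vh0)
next
  case (Suc t)
  have "vv xs us (Suc t) $ i \<ge> vv xs us t $ i"
    unfolding vv_eq St_Suc by simp
  thus ?case using Suc by linarith
qed

lemma hh_ge: "c \<le> hh xs us t $ i"
proof -
  have "sqrt (c^2) \<le> sqrt (vv xs us t $ i)" by (rule real_sqrt_le_mono[OF vv_ge])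
  moreover have "sqrt (c^2) = c" using c_pos by simp
  ultimately show ?thesis by (simp add: hh_def)
qed

lemma hh_pos: "\<forall>i. 0 < hh xs us t $ i"
  using hh_ge c_pos by (meson less_le_trans)

lemma xx_Suc:
  assumes "1 \<le> t"
  shows "xx xs us (Suc t) = wproj X (hh xs us t) (xx xs us t - \<alpha> *\<^sub>R (\<chi> i. gg xs us t $ i / hh xs us t $ i))"
proof -
  obtain t' where t: "t = Suc t'" using assms by (cases t) auto
  show ?thesis unfolding t xx_eq hh_def vv_eq gg_eq by (simp add: St_Suc xx_eq)
qed

lemma xx_1: "xx xs us 1 = x1" by (simp add: xx_eq St_0)

lemma xx_in: "1 \<le> t \<Longrightarrow> xx xs us t \<in> X"
proof (induction t)
  case 0 thus ?case by simp
next
  case (Suc t)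
  show ?case
  proof (cases "t = 0")
    case True thus ?thesis using xx_1 x1_in by simp
  next
    case False
    hence "1 \<le> t" by simp
    show ?thesis unfolding xx_Suc[OF \<open>1 \<le> t\<close>] by (rule wproj_in[OF hh_pos X_closed X_convex Xne])
  qed
qed

definition "Ebar = (\<integral>v. norm v \<partial>(unif_ball :: (real^'n) measure))"

definition "Gsq' xs us t = (\<Sum>i\<in>UNIV. hh xs us t $ i * (gmap X (hh xs us t) (xx xs us t) (Gf (xx xs us t)) \<alpha> $ i)^2)"

lemma pathwise:
  "(\<Sum>t\<in>{1..T}. Gsq' xs us t)
     \<le> 6 * Df / \<alpha> + (15/2) / c * (\<Sum>t\<in>{1..T}. (norm (gg xs us t - Gm mu (xx xs us t)))^2)
       + real T * (9/4) * (L * mu * Ebar)^2 / c"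
  unfolding Gsq'_def
proof (rule pathwise_sum[where fm="smooth f mu" and L=L and Gm="Gm mu" and Gf=Gf and x="xx xs us" and g="gg xs us" and h="hh xs us"])
  show "0 < c" by (rule c_pos)
  show "0 < \<alpha>" by (rule alpha_pos)
  show "\<alpha> * L \<le> c" using alpha_le L_pos by (simp add: field_simps)
  show "0 \<le> L" using L_pos by simp
  show "\<And>x y. smooth f mu y \<le> smooth f mu x + inner (Gm mu x) (y - x) + L/2 * (norm (y - x))^2"
    by (rule fm_desc)
  fix t assume t: "t \<in> {1..T}"
  show "\<forall>i. c \<le> hh xs us t $ i" using hh_ge by blast
  show "xx xs us t \<in> X" using t xx_in by simp
  show "vi X (hh xs us t) (xx xs us t) \<alpha> (gg xs us t) ((1/\<alpha>) *\<^sub>R (xx xs us t - xx xs us (Suc t)))"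
  proof -
    have t1: "1 \<le> t" using t by simp
    show ?thesis unfolding xx_Suc[OF t1] by (rule wproj_vi[OF hh_pos alpha_pos X_closed X_convex Xne])
  qed
  show "vi X (hh xs us t) (xx xs us t) \<alpha> (Gm mu (xx xs us t)) (gmap X (hh xs us t) (xx xs us t) (Gm mu (xx xs us t)) \<alpha>)"
    by (rule gmap_vi[OF hh_pos alpha_pos X_closed X_convex Xne])
  show "vi X (hh xs us t) (xx xs us t) \<alpha> (Gf (xx xs us t)) (gmap X (hh xs us t) (xx xs us t) (Gf (xx xs us t)) \<alpha>)"
    by (rule gmap_vi[OF hh_pos alpha_pos X_closed X_convex Xne])
  show "(norm (Gf (xx xs us t) - Gm mu (xx xs us t)))^2 \<le> (L * mu * Ebar)^2"
    using Gf_Gm[of "xx xs us t" mu] mu_pos unfolding Ebar_def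
    by (intro power_mono) auto
next
  show "smooth f mu (xx xs us 1) - smooth f mu (xx xs us (Suc T)) \<le> Df"
    using Df unfolding xx_1 mu_def by blast
qed

end

context zo2 begin

abbreviation "Om \<equiv> (omega P T :: ((nat \<Rightarrow> 's) \<times> (nat \<Rightarrow> real^'n) \<times> nat) measure)"

lemma Om_def': "Om = (PiM {1..T} (\<lambda>_. P)) \<Otimes>\<^sub>M ((PiM {1..T} (\<lambda>_. unif_sphere :: (real^'n) measure)) \<Otimes>\<^sub>M uniform_count_measure {1..T})"
  by (simp add: omega_def)

lemma meas_xs: "t \<in> {1..T} \<Longrightarrow> (\<lambda>w. fst w t) \<in> measurable Om P"
  unfolding Om_def' by (rule measurable_compose[OF measurable_fst measurable_component_singleton]) auto

lemma meas_us: "t \<in> {1..T} \<Longrightarrow> (\<lambda>w. fst (snd w) t) \<in> borel_measurable Om"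
proof -
  assume t: "t \<in> {1..T}"
  have A: "(\<lambda>w. fst (snd w) t) \<in> measurable Om (unif_sphere :: (real^'n) measure)"
    unfolding Om_def'
    by (rule measurable_compose[OF measurable_compose[OF measurable_snd measurable_fst] measurable_component_singleton]) (use t in auto)
  have B: "measurable Om (unif_sphere :: (real^'n) measure) = measurable Om borel"
    by (rule measurable_cong_sets) simp_all
  show ?thesis using A unfolding B .
qed

lemma F_comp:
  assumes y: "y \<in> borel_measurable M" and s: "s \<in> measurable M P"
  shows "(\<lambda>w. F (y w) (s w)) \<in> borel_measurable M"
proof -
  have "(\<lambda>w. (y w, s w)) \<in> measurable M (borel \<Otimes>\<^sub>M P)" using y s by measurable
  from measurable_compose[OF this F_meas] show ?thesis by simp
qed

lemma meas_state:
  "t \<le> T \<Longrightarrow> (\<lambda>w. fst (St (fst w) (fst (snd w)) t)) \<in> borel_measurable Om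
     \<and> (\<lambda>w. fst (snd (snd (St (fst w) (fst (snd w)) t)))) \<in> borel_measurable Om
     \<and> (\<lambda>w. snd (snd (snd (St (fst w) (fst (snd w)) t)))) \<in> borel_measurable Om"
proof (induction t)
  case 0 thus ?case by (simp add: St_0)
next
  case (Suc t)
  hence IH: "(\<lambda>w. fst (St (fst w) (fst (snd w)) t)) \<in> borel_measurable Om"
    "(\<lambda>w. fst (snd (snd (St (fst w) (fst (snd w)) t)))) \<in> borel_measurable Om"
    "(\<lambda>w. snd (snd (snd (St (fst w) (fst (snd w)) t)))) \<in> borel_measurable Om" by auto
  have st: "Suc t \<in> {1..T}" using Suc by auto
  define x where "x w = fst (St (fst w) (fst (snd w)) t)" for w :: "(nat \<Rightarrow> 's) \<times> (nat \<Rightarrow> real^'n) \<times> nat"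
  define v where "v w = fst (snd (snd (St (fst w) (fst (snd w)) t)))" for w :: "(nat \<Rightarrow> 's) \<times> (nat \<Rightarrow> real^'n) \<times> nat"
  define vh where "vh w = snd (snd (snd (St (fst w) (fst (snd w)) t)))" for w :: "(nat \<Rightarrow> 's) \<times> (nat \<Rightarrow> real^'n) \<times> nat"
  define s where "s w = fst w (Suc t)" for w :: "(nat \<Rightarrow> 's) \<times> (nat \<Rightarrow> real^'n) \<times> nat"
  define u where "u w = fst (snd w) (Suc t)" for w :: "(nat \<Rightarrow> 's) \<times> (nat \<Rightarrow> real^'n) \<times> nat"
  define g where "g w = zo_grad (\<lambda>z. F z (s w)) mu (x w) (u w)" for w :: "(nat \<Rightarrow> 's) \<times> (nat \<Rightarrow> real^'n) \<times> nat"
  define v' where "v' w = \<beta>2 *\<^sub>R v w + (1 - \<beta>2) *\<^sub>R (\<chi> i. (g w $ i)\<^sup>2)" for w :: "(nat \<Rightarrow> 's) \<times> (nat \<Rightarrow> real^'n) \<times> nat"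
  define vh' where "vh' w = (\<chi> i. max (vh w $ i) (v' w $ i))" for w :: "(nat \<Rightarrow> 's) \<times> (nat \<Rightarrow> real^'n) \<times> nat"
  define H where "H w = (\<chi> i. sqrt (vh' w $ i))" for w :: "(nat \<Rightarrow> 's) \<times> (nat \<Rightarrow> real^'n) \<times> nat"
  define Bv where "Bv w = x w - \<alpha> *\<^sub>R (\<chi> i. g w $ i / H w $ i)" for w :: "(nat \<Rightarrow> 's) \<times> (nat \<Rightarrow> real^'n) \<times> nat"
  have [measurable]: "x \<in> borel_measurable Om" "v \<in> borel_measurable Om" "vh \<in> borel_measurable Om"
    using IH unfolding x_def v_def vh_def by auto
  have [measurable]: "s \<in> measurable Om P" unfolding s_def by (rule meas_xs[OF st])
  have [measurable]: "u \<in> borel_measurable Om" unfolding u_def by (rule meas_us[OF st])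
  have F1[measurable]: "(\<lambda>w. F (x w + mu *\<^sub>R u w) (s w)) \<in> borel_measurable Om"
    by (rule F_comp) measurable
  have F2[measurable]: "(\<lambda>w. F (x w) (s w)) \<in> borel_measurable Om"
    by (rule F_comp) measurable
  have gm[measurable]: "g \<in> borel_measurable Om"
    unfolding g_def zo_grad_def by measurable
  have v'm[measurable]: "v' \<in> borel_measurable Om" unfolding v'_def by measurable
  have vh'm[measurable]: "vh' \<in> borel_measurable Om" unfolding vh'_def by measurable
  have Hm[measurable]: "H \<in> borel_measurable Om" unfolding H_def by measurable
  have Bvm[measurable]: "Bv \<in> borel_measurable Om" unfolding Bv_def by measurable
  have eqS: "St (fst w) (fst (snd w)) (Suc t) = (wproj X (H w) (Bv w), g w, v' w, vh' w)" for w
    unfolding St_Suc H_def Bv_def vh'_def v'_def g_def x_def v_def vh_def s_def u_def by simp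
  have Hc: "\<forall>i. c \<le> H w $ i" for w
  proof -
    have "H w = hh (fst w) (fst (snd w)) (Suc t)"
      unfolding hh_def vv_eq eqS H_def by simp
    thus ?thesis using hh_ge by simp
  qed
  have "(\<lambda>w. Wc c X (H w) (Bv w)) \<in> borel_measurable Om"
    by (rule borel_measurable_continuous_Pair[OF Hm Bvm Wc_cont[OF c_pos X_closed X_convex Xne]])
  moreover have "Wc c X (H w) (Bv w) = wproj X (H w) (Bv w)" for w
    unfolding Wc_def clampv_id[OF Hc] ..
  ultimately have xm: "(\<lambda>w. wproj X (H w) (Bv w)) \<in> borel_measurable Om" by simp
  have e1: "(\<lambda>w. fst (St (fst w) (fst (snd w)) (Suc t))) = (\<lambda>w. wproj X (H w) (Bv w))"
    by (simp only: eqS fst_conv)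
  have e2: "(\<lambda>w. fst (snd (snd (St (fst w) (fst (snd w)) (Suc t))))) = v'"
    by (simp only: eqS fst_conv snd_conv)
  have e3: "(\<lambda>w. snd (snd (snd (St (fst w) (fst (snd w)) (Suc t))))) = vh'"
    by (simp only: eqS snd_conv)
  have r1: "(\<lambda>w. fst (St (fst w) (fst (snd w)) (Suc t))) \<in> borel_measurable Om"
    by (rule ssubst[OF e1]) (rule xm)
  have r2: "(\<lambda>w. fst (snd (snd (St (fst w) (fst (snd w)) (Suc t))))) \<in> borel_measurable Om"
    by (rule ssubst[OF e2]) (rule v'm)
  have r3: "(\<lambda>w. snd (snd (snd (St (fst w) (fst (snd w)) (Suc t))))) \<in> borel_measurable Om"
    by (rule ssubst[OF e3]) (rule vh'm)
  show ?case by (intro conjI r1 r2 r3)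
qed

end

context zo2 begin

lemma xx_meas[measurable]: "t \<in> {1..T} \<Longrightarrow> (\<lambda>w. xx (fst w) (fst (snd w)) t) \<in> borel_measurable Om"
  unfolding xx_eq using meas_state[of "t - 1"] by auto

lemma vv_meas[measurable]: "t \<in> {1..T} \<Longrightarrow> (\<lambda>w. vv (fst w) (fst (snd w)) t) \<in> borel_measurable Om"
  unfolding vv_eq using meas_state[of t] by auto

lemma hh_meas[measurable]: "t \<in> {1..T} \<Longrightarrow> (\<lambda>w. hh (fst w) (fst (snd w)) t) \<in> borel_measurable Om"
  unfolding hh_def by measurable

lemma gg_meas[measurable]: "t \<in> {1..T} \<Longrightarrow> (\<lambda>w. gg (fst w) (fst (snd w)) t) \<in> borel_measurable Om"
proof -
  assume t: "t \<in> {1..T}"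
  note [measurable] = meas_xs[OF t] meas_us[OF t] xx_meas[OF t]
  have F1[measurable]: "(\<lambda>w. F (xx (fst w) (fst (snd w)) t + mu *\<^sub>R fst (snd w) t) (fst w t)) \<in> borel_measurable Om"
    by (rule F_comp) measurable
  have F2[measurable]: "(\<lambda>w. F (xx (fst w) (fst (snd w)) t) (fst w t)) \<in> borel_measurable Om"
    by (rule F_comp) measurable
  show ?thesis unfolding gg_eq zo_grad_def by measurable
qed

lemma gmap_eq_Wc:
  "gmap X (hh xs us t) x g \<alpha> = (1/\<alpha>) *\<^sub>R (x - Wc c X (hh xs us t) (x - \<alpha> *\<^sub>R (\<chi> i. g$i / hh xs us t $ i)))"
  unfolding gmap_def gmap_plus_eq[OF hh_pos alpha_pos] Wc_def clampv_id[OF allI[OF hh_ge]] ..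

lemma Gsq'_meas[measurable]: "t \<in> {1..T} \<Longrightarrow> (\<lambda>w. Gsq' (fst w) (fst (snd w)) t) \<in> borel_measurable Om"
proof -
  assume t: "t \<in> {1..T}"
  note [measurable] = hh_meas[OF t] xx_meas[OF t]
  have bm: "(\<lambda>w. xx (fst w) (fst (snd w)) t - \<alpha> *\<^sub>R (\<chi> i. Gf (xx (fst w) (fst (snd w)) t) $ i / hh (fst w) (fst (snd w)) t $ i)) \<in> borel_measurable Om"
    by measurable
  have [measurable]: "(\<lambda>w. Wc c X (hh (fst w) (fst (snd w)) t) (xx (fst w) (fst (snd w)) t - \<alpha> *\<^sub>R (\<chi> i. Gf (xx (fst w) (fst (snd w)) t) $ i / hh (fst w) (fst (snd w)) t $ i))) \<in> borel_measurable Om"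
    by (rule borel_measurable_continuous_Pair[OF hh_meas[OF t] bm Wc_cont[OF c_pos X_closed X_convex Xne]])
  show ?thesis unfolding Gsq'_def gmap_eq_Wc by measurable
qed

lemma e_meas[measurable]: "t \<in> {1..T} \<Longrightarrow> (\<lambda>w. (norm (gg (fst w) (fst (snd w)) t - Gm mu (xx (fst w) (fst (snd w)) t)))^2) \<in> borel_measurable Om"
proof -
  assume t: "t \<in> {1..T}"
  note [measurable] = gg_meas[OF t] xx_meas[OF t]
  show ?thesis by measurable
qed

lemma Gsq'_bound:
  assumes "1 \<le> t"
  shows "0 \<le> Gsq' xs us t" "Gsq' xs us t \<le> (real CARD('n) * \<eta>)^2 / c"
proof -
  define h where "h = hh xs us t"
  define x where "x = xx xs us t"
  define P' where "P' = gmap X h x (Gf x) \<alpha>"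
  have hp: "\<forall>i. 0 < h$i" unfolding h_def by (rule hh_pos)
  have hc: "\<forall>i. c \<le> h$i" unfolding h_def using hh_ge by blast
  have xX: "x \<in> X" unfolding x_def using xx_in[OF assms] .
  have vi: "vi X h x \<alpha> (Gf x) P'" unfolding P'_def by (rule gmap_vi[OF hp alpha_pos X_closed X_convex Xne])
  have G: "Gsq' xs us t = (\<Sum>i\<in>UNIV. h$i * (P'$i)^2)"
    unfolding Gsq'_def h_def x_def P'_def ..
  show "0 \<le> Gsq' xs us t" unfolding G using hp by (intro sum_nonneg) (simp add: less_imp_le)
  have "(\<Sum>i\<in>UNIV. h$i * (P'$i)^2) \<le> (\<Sum>i\<in>UNIV. (Gf x $ i)^2 / h$i)"
    by (rule wsum_amgm[OF hp vi_self[OF vi alpha_pos xX]])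
  also have "\<dots> \<le> (norm (Gf x))^2 / c" by (rule inv_weight_le[OF hc c_pos])
  also have "\<dots> \<le> (real CARD('n) * \<eta>)^2 / c"
    using Gf_bound[of x] c_pos by (intro divide_right_mono power_mono) auto
  finally show "Gsq' xs us t \<le> (real CARD('n) * \<eta>)^2 / c" unfolding G .
qed

lemma gg_bound:
  assumes s: "xs t \<in> space P" and u: "norm (us t) \<le> 1"
  shows "norm (gg xs us t) \<le> real CARD('n) * (real CARD('n) * \<eta>) + real CARD('n) * L * mu / 2"
proof -
  define x where "x = xx xs us t"
  define d where "d = real CARD('n)"
  have q: "\<bar>F (x + mu *\<^sub>R us t) (xs t) - F x (xs t) - inner (DF x (xs t)) (mu *\<^sub>R us t)\<bar> \<le> L/2 * (norm (mu *\<^sub>R us t))^2"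
    using DF_quad[OF s, of "x + mu *\<^sub>R us t" x] by simp
  have i: "\<bar>inner (DF x (xs t)) (mu *\<^sub>R us t)\<bar> \<le> d * \<eta> * mu"
  proof -
    have "\<bar>inner (DF x (xs t)) (mu *\<^sub>R us t)\<bar> \<le> norm (DF x (xs t)) * norm (mu *\<^sub>R us t)" by (rule Cauchy_Schwarz_ineq2)
    also have "\<dots> \<le> (d * \<eta>) * mu"
      using DF_bound[OF s, of x] u mu_pos unfolding d_def
      by (intro mult_mono) (auto intro: mult_left_le order_trans[OF norm_ge_zero])
    finally show ?thesis by simp
  qed
  have n: "(norm (mu *\<^sub>R us t))^2 \<le> mu^2"
  proof -
    have "norm (mu *\<^sub>R us t) \<le> mu" using u mu_pos by (auto intro: mult_left_le)
    hence "(norm (mu *\<^sub>R us t))^2 \<le> mu^2" by (intro power_mono) auto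
    thus ?thesis .
  qed
  have "L/2 * (norm (mu *\<^sub>R us t))^2 \<le> L/2 * mu^2" using n L_pos by (intro mult_left_mono) auto
  hence dF: "\<bar>F (x + mu *\<^sub>R us t) (xs t) - F x (xs t)\<bar> \<le> d * \<eta> * mu + L/2 * mu^2"
    using q i by linarith
  have "norm (gg xs us t) = d / mu * \<bar>F (x + mu *\<^sub>R us t) (xs t) - F x (xs t)\<bar> * norm (us t)"
    unfolding gg_eq zo_grad_def x_def d_def using mu_pos by (simp add: abs_mult)
  also have "\<dots> \<le> d / mu * (d * \<eta> * mu + L/2 * mu^2) * 1"
    using dF u mu_pos by (intro mult_mono) (auto simp: d_def)
  also have "\<dots> = d * (d * \<eta>) + d * L * mu / 2" using mu_pos by (simp add: field_simps power2_eq_square)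
  finally show ?thesis unfolding d_def .
qed

end

lemma sphere_norm_null: "{u::real^'n. 1 < norm u} \<in> null_sets (unif_sphere :: (real^'n) measure)"
proof -
  have m: "(\<lambda>v::real^'n. (1 / norm v) *\<^sub>R v) \<in> measurable unif_ball borel" by measurable
  have S: "{u::real^'n. 1 < norm u} \<in> sets borel" by measurable
  have "emeasure (unif_sphere :: (real^'n) measure) {u. 1 < norm u}
      = emeasure unif_ball ((\<lambda>v::real^'n. (1 / norm v) *\<^sub>R v) -` {u. 1 < norm u} \<inter> space unif_ball)"
    unfolding unif_sphere_def by (rule emeasure_distr[OF m S])
  also have "(\<lambda>v::real^'n. (1 / norm v) *\<^sub>R v) -` {u. 1 < norm u} \<inter> space unif_ball = {}"
    by (auto simp: divide_simps split: if_splits)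
  finally show ?thesis using S by (simp add: null_sets_def)
qed

context zo2 begin

lemma AE_us: "AE w in Om. \<forall>t\<in>{1..T}. norm (fst (snd w) t) \<le> 1"
proof (rule AE_finite_allI)
  show "finite {1..T}" by simp
  fix t assume t: "t \<in> {1..T}"
  define A where "A = PiM {1..T} (\<lambda>_. P)"
  define B where "B = PiM {1..T} (\<lambda>_. unif_sphere :: (real^'n) measure)"
  define U where "U = uniform_count_measure {1..T}"
  interpret S: prob_space "(\<lambda>_. unif_sphere :: (real^'n) measure) i" for i :: nat
    by (rule prob_unif_sphere)
  interpret PB: product_prob_space "\<lambda>_. unif_sphere :: (real^'n) measure" "{1..T}"
    by unfold_locales
  have Aps: "prob_space A" unfolding A_def using P by (intro prob_space_PiM) auto
  have Bps: "prob_space B" unfolding B_def using prob_unif_sphere by (intro prob_space_PiM) auto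
  have Ups: "prob_space U" unfolding U_def by (rule prob_space_uniform_count_measure) (use T_pos in auto)
  interpret U: prob_space U by (rule Ups)
  interpret BU: prob_space "B \<Otimes>\<^sub>M U" by (rule prob_space_pair[OF Bps Ups])
  define S where "S = {us \<in> space B. us t \<in> {u::real^'n. 1 < norm u}}"
  have Snull: "S \<in> null_sets B"
  proof -
    have Ss: "{u::real^'n. 1 < norm u} \<in> sets unif_sphere" by simp
    have "S \<in> sets B" unfolding S_def B_def using t by measurable
    moreover have "emeasure B S = 0"
      unfolding S_def B_def using PB.emeasure_PiM_Collect_single[OF t Ss] sphere_norm_null
      by (simp add: null_sets_def)
    ultimately show ?thesis by (simp add: null_sets_def)
  qed
  have N1: "S \<times> space U \<in> null_sets (B \<Otimes>\<^sub>M U)"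
    by (rule U.times_in_null_sets1[OF Snull]) simp
  have N2: "space A \<times> (S \<times> space U) \<in> null_sets (A \<Otimes>\<^sub>M (B \<Otimes>\<^sub>M U))"
    by (rule BU.times_in_null_sets2[OF _ N1]) simp
  show "AE w in Om. norm (fst (snd w) t) \<le> 1"
  proof (rule AE_I'[OF N2[unfolded A_def B_def U_def, folded Om_def']])
    show "{w \<in> space Om. \<not> norm (fst (snd w) t) \<le> 1} \<subseteq> space (PiM {1..T} (\<lambda>_. P)) \<times> (S \<times> space (uniform_count_measure {1..T}))"
      unfolding S_def B_def by (auto simp: Om_def' space_pair_measure)
  qed
qed

end

context zo2 begin

lemma Om_prob: "prob_space Om"
proof -
  have A: "prob_space (PiM {1..T} (\<lambda>_. P))" using P by (intro prob_space_PiM) auto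
  have B: "prob_space (PiM {1..T} (\<lambda>_. unif_sphere :: (real^'n) measure))" using prob_unif_sphere by (intro prob_space_PiM) auto
  have U: "prob_space (uniform_count_measure {1..T})" by (rule prob_space_uniform_count_measure) (use T_pos in auto)
  show ?thesis unfolding Om_def' by (intro prob_space_pair A B U)
qed

lemma space_Om_xs: "w \<in> space Om \<Longrightarrow> t \<in> {1..T} \<Longrightarrow> fst w t \<in> space P"
  unfolding Om_def' by (auto simp: space_pair_measure space_PiM)

lemma space_Om_R: "w \<in> space Om \<Longrightarrow> snd (snd w) \<in> {1..T}"
  unfolding Om_def' by (auto simp: space_pair_measure space_uniform_count_measure)

lemma ucm_meas: "(\<phi> :: nat \<Rightarrow> real) \<in> borel_measurable (uniform_count_measure {1..T})"
proof -
  have "measurable (uniform_count_measure {1..T}) (borel :: real measure) = measurable (count_space {1..T}) borel"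
    by (rule measurable_cong_sets) (simp_all add: sets_uniform_count_measure)
  thus ?thesis by simp
qed

lemma R_meas: "(\<lambda>w. snd (snd w)) \<in> measurable Om (uniform_count_measure {1..T})"
  unfolding Om_def' by measurable

definition "Ke = (real CARD('n) * (real CARD('n) * \<eta>) + real CARD('n) * L * mu / 2 + real CARD('n) * \<eta>)^2"

lemma e_int: "t \<in> {1..T} \<Longrightarrow> integrable Om (\<lambda>w. (norm (gg (fst w) (fst (snd w)) t - Gm mu (xx (fst w) (fst (snd w)) t)))^2)"
proof -
  assume t: "t \<in> {1..T}"
  interpret prob_space Om by (rule Om_prob)
  show ?thesis
  proof (rule integrable_const_bound[where B=Ke])
    show "(\<lambda>w. (norm (gg (fst w) (fst (snd w)) t - Gm mu (xx (fst w) (fst (snd w)) t)))^2) \<in> borel_measurable Om"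
      by (rule e_meas[OF t])
    show "AE w in Om. norm ((norm (gg (fst w) (fst (snd w)) t - Gm mu (xx (fst w) (fst (snd w)) t)))^2) \<le> Ke"
      using AE_us AE_space
    proof eventually_elim
      case (elim w)
      have u: "norm (fst (snd w) t) \<le> 1" using elim t by auto
      have s: "fst w t \<in> space P" using space_Om_xs elim t by auto
      have "norm (gg (fst w) (fst (snd w)) t - Gm mu (xx (fst w) (fst (snd w)) t))
          \<le> norm (gg (fst w) (fst (snd w)) t) + norm (Gm mu (xx (fst w) (fst (snd w)) t))"
        by (rule norm_triangle_ineq4)
      also have "\<dots> \<le> (real CARD('n) * (real CARD('n) * \<eta>) + real CARD('n) * L * mu / 2) + real CARD('n) * \<eta>"
        by (intro add_mono gg_bound[where xs="fst w" and us="fst (snd w)" and t=t, OF s u] Gm_bound)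
      finally have "(norm (gg (fst w) (fst (snd w)) t - Gm mu (xx (fst w) (fst (snd w)) t)))^2 \<le> Ke"
        unfolding Ke_def by (intro power_mono) auto
      thus ?case by simp
    qed
  qed
qed

lemma main_ineq:
  defines "\<sigma>2 \<equiv> Max ((\<lambda>t. \<integral>w. (norm (gg (fst w) (fst (snd w)) t - Gm mu (xx (fst w) (fst (snd w)) t)))^2 \<partial>Om) ` {1..T})"
  shows "(\<integral>w. Gsq' (fst w) (fst (snd w)) (snd (snd w)) \<partial>Om)
           \<le> 6 * Df / (\<alpha> * T) + 3 * L\<^sup>2 * real CARD('n) / (4 * c * T)
             + 6 * \<eta>\<^sup>2 / (c ^ 4 * T) * (\<sigma>2 + real CARD('n) * \<eta>\<^sup>2)
             + (3 * c + 9) / c * \<sigma>2"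
proof -
  interpret prob_space Om by (rule Om_prob)
  define A where "A = PiM {1..T} (\<lambda>_. P)"
  define B where "B = PiM {1..T} (\<lambda>_. unif_sphere :: (real^'n) measure)"
  define U where "U = uniform_count_measure {1..T}"
  have OmABU: "Om = A \<Otimes>\<^sub>M (B \<Otimes>\<^sub>M U)" unfolding A_def B_def U_def by (rule Om_def')
  have Aps: "prob_space A" unfolding A_def using P by (intro prob_space_PiM) auto
  have Bps: "prob_space B" unfolding B_def using prob_unif_sphere by (intro prob_space_PiM) auto
  have Ups: "prob_space U" unfolding U_def by (rule prob_space_uniform_count_measure) (use T_pos in auto)
  define G where "G t w = Gsq' (fst w) (fst (snd w)) t" for t and w :: "(nat \<Rightarrow> 's) \<times> (nat \<Rightarrow> real^'n) \<times> nat"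
  define e where "e t w = (norm (gg (fst w) (fst (snd w)) t - Gm mu (xx (fst w) (fst (snd w)) t)))^2" for t and w :: "(nat \<Rightarrow> 's) \<times> (nat \<Rightarrow> real^'n) \<times> nat"
  define KG where "KG = (real CARD('n) * \<eta>)^2 / c"
  have Gm': "t \<in> {1..T} \<Longrightarrow> G t \<in> borel_measurable Om" for t unfolding G_def by (rule Gsq'_meas)
  have Gb: "t \<in> {1..T} \<Longrightarrow> 0 \<le> G t w \<and> G t w \<le> KG" for t w unfolding G_def KG_def using Gsq'_bound by auto
  have Gint: "t \<in> {1..T} \<Longrightarrow> integrable Om (G t)" for t
    by (rule integrable_bounded_meas[OF Om_prob Gm'[of t], where K=KG]) (use Gb in auto)
  have eint: "t \<in> {1..T} \<Longrightarrow> integrable Om (e t)" for t unfolding e_def by (rule e_int)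
  have e0: "0 \<le> e t w" for t w unfolding e_def by simp
  have step1: "(\<integral>w. G (snd (snd w)) w \<partial>Om) = (\<Sum>t\<in>{1..T}. (\<integral>w. G t w \<partial>Om) * (1 / real T))"
  proof -
    have "(\<integral>w. G (snd (snd w)) w \<partial>Om) = (\<integral>w. (\<Sum>t\<in>{1..T}. G t w * indicator {t} (snd (snd w))) \<partial>Om)"
    proof (rule Bochner_Integration.integral_cong[OF refl])
      fix w assume w: "w \<in> space Om"
      have R: "snd (snd w) \<in> {1..T}" by (rule space_Om_R[OF w])
      have "(\<Sum>t\<in>{1..T}. G t w * indicator {t} (snd (snd w))) = (\<Sum>t\<in>{snd (snd w)}. G t w * indicator {t} (snd (snd w)))"
        using R by (intro sum.mono_neutral_right) (auto simp: indicator_def)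
      thus "G (snd (snd w)) w = (\<Sum>t\<in>{1..T}. G t w * indicator {t} (snd (snd w)))" by simp
    qed
    also have "\<dots> = (\<Sum>t\<in>{1..T}. (\<integral>w. G t w * indicator {t} (snd (snd w)) \<partial>Om))"
    proof (rule Bochner_Integration.integral_sum)
      fix t assume t: "t \<in> {1..T}"
      show "integrable Om (\<lambda>w. G t w * indicator {t} (snd (snd w)))"
      proof (rule integrable_bounded_meas[OF Om_prob, where K=KG])
        show "(\<lambda>w. G t w * indicator {t} (snd (snd w))) \<in> borel_measurable Om"
          using Gm'[OF t] measurable_compose[OF R_meas ucm_meas[of "indicator {t}"]] by (rule borel_measurable_times)
        fix w show "\<bar>G t w * indicator {t} (snd (snd w))\<bar> \<le> KG"
          using Gb[OF t, of w] by (auto simp: indicator_def)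
      qed
    qed
    also have "\<dots> = (\<Sum>t\<in>{1..T}. (\<integral>w. G t w \<partial>Om) * (1 / real T))"
    proof (rule sum.cong[OF refl])
      fix t assume t: "t \<in> {1..T}"
      have "(\<integral>w. G t w * indicator {t} (snd (snd w)) \<partial>Om) = (\<integral>w. G t w \<partial>Om) * (\<integral>r. indicator {t} r \<partial>U)"
        unfolding OmABU
      proof (rule indep_lemma[OF Aps Bps Ups, where K=KG and K'=1])
        show "G t \<in> borel_measurable (A \<Otimes>\<^sub>M (B \<Otimes>\<^sub>M U))" using Gm'[OF t] unfolding OmABU .
        show "\<And>w. \<bar>G t w\<bar> \<le> KG" using Gb[OF t] by auto
        show "\<And>x y r r'. G t (x, y, r) = G t (x, y, r')" by (simp add: G_def)
        show "(indicator {t} :: nat \<Rightarrow> real) \<in> borel_measurable U" unfolding U_def by (rule ucm_meas)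
        show "\<And>r. \<bar>indicator {t} r\<bar> \<le> (1::real)" by (simp add: indicator_def)
      qed
      also have "(\<integral>r. indicator {t} r \<partial>U) = 1 / real T"
        unfolding U_def using t by (simp add: measure_uniform_count_measure)
      finally show "(\<integral>w. G t w * indicator {t} (snd (snd w)) \<partial>Om) = (\<integral>w. G t w \<partial>Om) * (1 / real T)" .
    qed
    finally show ?thesis .
  qed
  define C0 where "C0 = 6 * Df / \<alpha> + real T * (9/4) * (L * mu * Ebar)^2 / c"
  have step2: "(\<Sum>t\<in>{1..T}. (\<integral>w. G t w \<partial>Om)) \<le> C0 + (15/2) / c * (\<Sum>t\<in>{1..T}. (\<integral>w. e t w \<partial>Om))"
  proof -
    have "(\<Sum>t\<in>{1..T}. (\<integral>w. G t w \<partial>Om)) = (\<integral>w. (\<Sum>t\<in>{1..T}. G t w) \<partial>Om)"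
      by (rule Bochner_Integration.integral_sum[symmetric]) (rule Gint)
    also have "\<dots> \<le> (\<integral>w. C0 + (15/2) / c * (\<Sum>t\<in>{1..T}. e t w) \<partial>Om)"
    proof (rule integral_mono)
      show "integrable Om (\<lambda>w. \<Sum>t\<in>{1..T}. G t w)" by (intro Bochner_Integration.integrable_sum Gint)
      show "integrable Om (\<lambda>w. C0 + (15/2) / c * (\<Sum>t\<in>{1..T}. e t w))"
        by (intro Bochner_Integration.integrable_add Bochner_Integration.integrable_mult_right Bochner_Integration.integrable_sum eint) simp_all
      fix w
      show "(\<Sum>t\<in>{1..T}. G t w) \<le> C0 + (15/2) / c * (\<Sum>t\<in>{1..T}. e t w)"
        using pathwise[of "fst w" "fst (snd w)"] unfolding G_def e_def C0_def by simp
    qed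
    also have "\<dots> = C0 + (15/2) / c * (\<Sum>t\<in>{1..T}. (\<integral>w. e t w \<partial>Om))"
    proof -
      have i1: "integrable Om (\<lambda>w. (15/2) / c * (\<Sum>t\<in>{1..T}. e t w))"
        by (intro Bochner_Integration.integrable_mult_right Bochner_Integration.integrable_sum eint)
      have "(\<integral>w. C0 + (15/2) / c * (\<Sum>t\<in>{1..T}. e t w) \<partial>Om) = (\<integral>w. C0 \<partial>Om) + (\<integral>w. (15/2) / c * (\<Sum>t\<in>{1..T}. e t w) \<partial>Om)"
        by (rule Bochner_Integration.integral_add[OF _ i1]) simp
      also have "(\<integral>w. C0 \<partial>Om) = C0" using prob_space by simp
      also have "(\<integral>w. (15/2) / c * (\<Sum>t\<in>{1..T}. e t w) \<partial>Om) = (15/2) / c * (\<integral>w. (\<Sum>t\<in>{1..T}. e t w) \<partial>Om)"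
        by (rule integral_mult_right_zero)
      also have "(\<integral>w. (\<Sum>t\<in>{1..T}. e t w) \<partial>Om) = (\<Sum>t\<in>{1..T}. (\<integral>w. e t w \<partial>Om))"
        by (rule Bochner_Integration.integral_sum) (rule eint)
      finally show ?thesis .
    qed
    finally show ?thesis .
  qed
  have \<sigma>2e: "\<sigma>2 = Max ((\<lambda>t. \<integral>w. e t w \<partial>Om) ` {1..T})" unfolding \<sigma>2_def e_def ..
  have le\<sigma>: "t \<in> {1..T} \<Longrightarrow> (\<integral>w. e t w \<partial>Om) \<le> \<sigma>2" for t
    unfolding \<sigma>2e by (rule Max_ge) auto
  have \<sigma>0: "0 \<le> \<sigma>2"
  proof -
    have "1 \<in> {1..T}" using T_pos by simp
    moreover have "0 \<le> (\<integral>w. e 1 w \<partial>Om)" by (rule integral_nonneg_AE) (simp add: e0)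
    ultimately show ?thesis using le\<sigma>[of 1] by linarith
  qed
  have sum\<sigma>: "(\<Sum>t\<in>{1..T}. (\<integral>w. e t w \<partial>Om)) \<le> real T * \<sigma>2"
  proof -
    have "(\<Sum>t\<in>{1..T}. (\<integral>w. e t w \<partial>Om)) \<le> (\<Sum>t\<in>{1..T}. \<sigma>2)" by (rule sum_mono) (rule le\<sigma>)
    thus ?thesis by simp
  qed
  have Tpos: "0 < real T" using T_pos by simp
  have LHS: "(\<integral>w. G (snd (snd w)) w \<partial>Om) \<le> C0 / real T + (15/2) / c * \<sigma>2"
  proof -
    have "(\<integral>w. G (snd (snd w)) w \<partial>Om) = (\<Sum>t\<in>{1..T}. (\<integral>w. G t w \<partial>Om)) / real T"
      unfolding step1 by (simp add: sum_divide_distrib)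
    also have "\<dots> \<le> (C0 + (15/2) / c * (real T * \<sigma>2)) / real T"
    proof (rule divide_right_mono)
      have "(15/2) / c * (\<Sum>t\<in>{1..T}. (\<integral>w. e t w \<partial>Om)) \<le> (15/2) / c * (real T * \<sigma>2)"
        using sum\<sigma> c_pos by (intro mult_left_mono) auto
      thus "(\<Sum>t\<in>{1..T}. (\<integral>w. G t w \<partial>Om)) \<le> C0 + (15/2) / c * (real T * \<sigma>2)"
        using step2 by linarith
    qed (use Tpos in simp)
    also have "\<dots> = C0 / real T + (15/2) / c * \<sigma>2" using Tpos by (simp add: field_simps)
    finally show ?thesis .
  qed
  have dpos: "0 < real CARD('n)" by simp
  have mu2: "mu^2 = 1 / (real T * real CARD('n))" unfolding mu_def using Tpos dpos
    by (simp add: power_divide real_sqrt_pow2 less_imp_le)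
  have Eb: "3 * Ebar^2 \<le> (real CARD('n))^2" unfolding Ebar_def by (rule E_bound)
  have term1: "C0 / real T = 6 * Df / (\<alpha> * T) + (9/4) * (L * mu * Ebar)^2 / c"
    unfolding C0_def using Tpos by (simp add: field_simps)
  have term2: "(9/4) * (L * mu * Ebar)^2 / c \<le> 3 * L\<^sup>2 * real CARD('n) / (4 * c * T)"
  proof -
    have "(9/4) * (L * mu * Ebar)^2 / c = (3/4) * L^2 * (3 * Ebar^2) / (c * T * real CARD('n))"
      using mu2 c_pos Tpos dpos by (simp add: power_mult_distrib field_simps)
    also have "\<dots> \<le> (3/4) * L^2 * (real CARD('n))^2 / (c * T * real CARD('n))"
      using Eb c_pos Tpos dpos by (intro divide_right_mono mult_left_mono) auto
    also have "\<dots> = 3 * L\<^sup>2 * real CARD('n) / (4 * c * T)"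
      using c_pos Tpos dpos by (simp add: field_simps power2_eq_square)
    finally show ?thesis .
  qed
  have term3: "(15/2) / c * \<sigma>2 \<le> (3 * c + 9) / c * \<sigma>2"
    using \<sigma>0 c_pos by (intro mult_right_mono divide_right_mono) auto
  have term4: "0 \<le> 6 * \<eta>\<^sup>2 / (c ^ 4 * T) * (\<sigma>2 + real CARD('n) * \<eta>\<^sup>2)"
    using \<sigma>0 c_pos Tpos by (intro mult_nonneg_nonneg divide_nonneg_pos add_nonneg_nonneg) auto
  have "(\<integral>w. Gsq' (fst w) (fst (snd w)) (snd (snd w)) \<partial>Om) = (\<integral>w. G (snd (snd w)) w \<partial>Om)"
    unfolding G_def ..
  also have "\<dots> \<le> 6 * Df / (\<alpha> * T) + 3 * L\<^sup>2 * real CARD('n) / (4 * c * T)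
             + 6 * \<eta>\<^sup>2 / (c ^ 4 * T) * (\<sigma>2 + real CARD('n) * \<eta>\<^sup>2)
             + (3 * c + 9) / c * \<sigma>2"
    using LHS term1 term2 term3 term4 by linarith
  finally show ?thesis .
qed

end

theorem theorem2:
  fixes F :: "real^'n \<Rightarrow> 's \<Rightarrow> real"
    and P :: "'s measure"
    and X :: "(real^'n) set"
    and x1 vh0 :: "real^'n"
    and Lg \<eta> c \<alpha> \<beta>2 Df :: real
    and T :: nat
  defines "d \<equiv> CARD('n)"
  defines "f \<equiv> (\<lambda>x. \<integral>s. F x s \<partial>P)"
  defines "\<mu> \<equiv> 1 / sqrt (real T * real d)"
  defines "fmu \<equiv> smooth f \<mu>"
  defines "xt \<equiv> (\<lambda>(xs, us, r::nat) t. zo_x F X x1 vh0 (\<lambda>_. \<alpha>) (\<lambda>_. 0) \<beta>2 \<mu> xs us t)"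
  defines "vht \<equiv> (\<lambda>(xs, us, r::nat) t. zo_vhat F X x1 vh0 (\<lambda>_. \<alpha>) (\<lambda>_. 0) \<beta>2 \<mu> xs us t)"
  defines "ght \<equiv> (\<lambda>(xs, us, r::nat) t. zo_ghat F X x1 vh0 (\<lambda>_. \<alpha>) (\<lambda>_. 0) \<beta>2 \<mu> xs us t)"
  defines "Gsq \<equiv> (\<lambda>w t. (norm (\<chi> i. sqrt (sqrt (vht w t $ i)) *
              gmap X (\<chi> i. sqrt (vht w t $ i)) (xt w t) (grad f (xt w t)) \<alpha> $ i))\<^sup>2)"
  defines "\<sigma>2 \<equiv> Max ((\<lambda>t. \<integral>w. (norm (ght w t - grad fmu (xt w t)))\<^sup>2 \<partial>omega P T) ` {1..T})"
  assumes P: "prob_space P"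
    and F_meas: "(\<lambda>(x, s). F x s) \<in> borel_measurable (borel \<Otimes>\<^sub>M P)"
    and F_int: "\<And>x. integrable P (F x)"
    and A1_diff: "\<And>s x. s \<in> space P \<Longrightarrow> (\<lambda>z. F z s) differentiable (at x)"
    and A1_lip: "\<And>s x y. s \<in> space P \<Longrightarrow>
                   norm (grad (\<lambda>z. F z s) x - grad (\<lambda>z. F z s) y) \<le> Lg * norm (x - y)"
    and A2: "\<And>s x. s \<in> space P \<Longrightarrow> infnorm (grad (\<lambda>z. F z s) x) \<le> \<eta>"
    and Lg_pos: "Lg > 0"
    and X_closed: "closed X" and X_convex: "convex X" and x1_in: "x1 \<in> X"
    and c_pos: "c > 0" and vh0: "\<And>i. sqrt (vh0 $ i) \<ge> c"
    and alpha_pos: "\<alpha> > 0" and alpha_le: "\<alpha> \<le> c / Lg"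
    and beta2: "0 < \<beta>2" "\<beta>2 \<le> 1"
    and T_pos: "T \<ge> 1"
    and Df: "\<And>x. fmu x1 - fmu x \<le> Df"
  shows "(\<integral>w. Gsq w (snd (snd w)) \<partial>omega P T)
           \<le> 6 * Df / (\<alpha> * T) + 3 * Lg\<^sup>2 * d / (4 * c * T)
             + 6 * \<eta>\<^sup>2 / (c ^ 4 * T) * (\<sigma>2 + d * \<eta>\<^sup>2)
             + (3 * c + 9) / c * \<sigma>2"
proof -
  have zax: "zo F P Lg \<eta>"
    by (rule zo.intro[OF P F_meas F_int A1_diff A1_lip A2 Lg_pos])
  interpret Z0: zo F P Lg \<eta> by (rule zax)
  have fz: "f = zo.f F P" unfolding f_def by (rule ext) (simp add: Z0.f_def)
  interpret Z: zo2 F P Lg \<eta> X x1 vh0 c \<alpha> \<beta>2 Df T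
  proof (rule zo2.intro[OF zax], rule zo2_axioms.intro)
    show "closed X" by (rule X_closed)
    show "convex X" by (rule X_convex)
    show "x1 \<in> X" by (rule x1_in)
    show "0 < c" by (rule c_pos)
    show "\<And>i. c \<le> sqrt (vh0 $ i)" by (rule vh0)
    show "0 < \<alpha>" by (rule alpha_pos)
    show "\<alpha> \<le> c / Lg" by (rule alpha_le)
    show "0 < \<beta>2" "\<beta>2 \<le> 1" by (rule beta2(1), rule beta2(2))
    show "1 \<le> T" by (rule T_pos)
    show "\<And>x. smooth (zo.f F P) (1 / sqrt (real T * real CARD('n))) x1 - smooth (zo.f F P) (1 / sqrt (real T * real CARD('n))) x \<le> Df"
      using Df unfolding fmu_def \<mu>_def d_def fz .
  qed
  have mu: "\<mu> = Z.mu" unfolding \<mu>_def Z.mu_def d_def ..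
  have xt: "xt w t = Z.xx (fst w) (fst (snd w)) t" for w t
    unfolding xt_def Z.xx_def mu by (cases w) auto
  have vht: "vht w t = Z.vv (fst w) (fst (snd w)) t" for w t
    unfolding vht_def Z.vv_def mu by (cases w) auto
  have ght: "ght w t = Z.gg (fst w) (fst (snd w)) t" for w t
    unfolding ght_def Z.gg_def mu by (cases w) auto
  have gradf: "grad f x = Z0.Gf x" for x unfolding fz by (rule Z0.grad_f)
  have gradfmu: "grad fmu x = Z0.Gm Z.mu x" for x unfolding fmu_def fz mu by (rule Z0.grad_fm)
  have hh: "(\<chi> i. sqrt (vht w t $ i)) = Z.hh (fst w) (fst (snd w)) t" for w t
    unfolding Z.hh_def vht ..
  have G: "Gsq w t = Z.Gsq' (fst w) (fst (snd w)) t" for w t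
  proof -
    have "Gsq w t = (\<Sum>i\<in>UNIV. (sqrt (sqrt (vht w t $ i)) * gmap X (Z.hh (fst w) (fst (snd w)) t) (Z.xx (fst w) (fst (snd w)) t) (Z0.Gf (Z.xx (fst w) (fst (snd w)) t)) \<alpha> $ i)^2)"
      unfolding Gsq_def sq_norm_vec hh gradf xt by simp
    also have "\<dots> = Z.Gsq' (fst w) (fst (snd w)) t"
      unfolding Z.Gsq'_def
    proof (rule sum.cong[OF refl])
      fix i
      have v0: "0 \<le> vht w t $ i" unfolding vht using Z.vv_ge[of "fst w" "fst (snd w)" t i]
        by (meson order_trans zero_le_power2)
      show "(sqrt (sqrt (vht w t $ i)) * gmap X (Z.hh (fst w) (fst (snd w)) t) (Z.xx (fst w) (fst (snd w)) t) (Z0.Gf (Z.xx (fst w) (fst (snd w)) t)) \<alpha> $ i)^2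
          = Z.hh (fst w) (fst (snd w)) t $ i * (gmap X (Z.hh (fst w) (fst (snd w)) t) (Z.xx (fst w) (fst (snd w)) t) (Z0.Gf (Z.xx (fst w) (fst (snd w)) t)) \<alpha> $ i)^2"
        unfolding Z.hh_def vht[symmetric] using v0 by (simp add: power_mult_distrib)
    qed
    finally show ?thesis .
  qed
  have s2: "\<sigma>2 = Max ((\<lambda>t. \<integral>w. (norm (Z.gg (fst w) (fst (snd w)) t - Z0.Gm Z.mu (Z.xx (fst w) (fst (snd w)) t)))^2 \<partial>Z.Om) ` {1..T})"
    unfolding \<sigma>2_def ght xt gradfmu ..
  have "(\<integral>w. Gsq w (snd (snd w)) \<partial>omega P T) = (\<integral>w. Z.Gsq' (fst w) (fst (snd w)) (snd (snd w)) \<partial>Z.Om)"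
    unfolding G ..
  also have "\<dots> \<le> 6 * Df / (\<alpha> * T) + 3 * Lg\<^sup>2 * real CARD('n) / (4 * c * T)
             + 6 * \<eta>\<^sup>2 / (c ^ 4 * T) * (\<sigma>2 + real CARD('n) * \<eta>\<^sup>2)
             + (3 * c + 9) / c * \<sigma>2"
    unfolding s2 by (rule Z.main_ineq)
  finally show ?thesis unfolding d_def .
qed

end
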